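(* Let $\lambda>0$, $\Sigma\in\mathbb{R}^{d\times d}$ symmetric positive definite, $\mu\in\mathbb{R}^d$, and let $X_1,X_2,\dots$ be i.i.d. $\mathcal{N}(0,\Sigma)$. For $L\ge1$ let \[ T_L(X_1)=\frac{\sum_{k=1}^LX_k\exp(\lambda\langle X_1,\mu\rangle\langle X_k,\mu\rangle)}{\sum_{k=1}^L\exp(\lambda\langle X_1,\mu\rangle\langle X_k,\mu\rangle)},\qquad T_\infty(X_1)=\lambda\Sigma\mu\mu^\top X_1. \] Then, as $L\to\infty$, $T_L(X_1)\to T_\infty(X_1)$ almost surely, $D_\mu T_L(X_1)\to D_\mu T_\infty(X_1)$ almost surely, and $D_\mu^2T_L(X_1)\to D_\mu^2T_\infty(X_1)$ almost surely.
   Context: $D_\mu$ and $D_\mu^2$ denote the first and second derivatives with respect to the parameter $\mu$. *)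

theory Defs
  imports "HOL-Probability.Probability"
begin

definition sym_pos_def :: "real^'d^'d \<Rightarrow> bool" where
  "sym_pos_def S \<longleftrightarrow> transpose S = S \<and> (\<forall>x. x \<noteq> 0 \<longrightarrow> x \<bullet> (S *v x) > 0)"

definition mvn_density :: "real^'d^'d \<Rightarrow> real^'d \<Rightarrow> real" where
  "mvn_density S x =
     exp (- (x \<bullet> (matrix_inv S *v x)) / 2) / sqrt ((2 * pi) ^ CARD('d) * det S)"

definition T_L :: "real \<Rightarrow> (nat \<Rightarrow> real^'d) \<Rightarrow> nat \<Rightarrow> real^'d \<Rightarrow> real^'d" where
  "T_L lam x L mu =
     (\<Sum>k\<in>{1..L}. exp (lam * (x 1 \<bullet> mu) * (x k \<bullet> mu)) *\<^sub>R x k) /\<^sub>R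
     (\<Sum>k\<in>{1..L}. exp (lam * (x 1 \<bullet> mu) * (x k \<bullet> mu)))"

definition T_inf :: "real \<Rightarrow> real^'d^'d \<Rightarrow> real^'d \<Rightarrow> real^'d \<Rightarrow> real^'d" where
  "T_inf lam S x1 mu = lam *\<^sub>R ((S ** (\<chi> i j. mu $ i * mu $ j)) *v x1)"

definition D1 :: "('a::real_normed_vector \<Rightarrow> 'b::real_normed_vector) \<Rightarrow> 'a \<Rightarrow> 'a \<Rightarrow> 'b" where
  "D1 f mu h = frechet_derivative f (at mu) h"

definition D2 :: "('a::real_normed_vector \<Rightarrow> 'b::real_normed_vector) \<Rightarrow> 'a \<Rightarrow> 'a \<Rightarrow> 'a \<Rightarrow> 'b" where
  "D2 f mu h k = frechet_derivative (\<lambda>nu. D1 f nu h) (at mu) k"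

end

theory Submission
  imports Defs
begin


lemma (in prob_space) integrable_pow_le4:
  fixes f :: "'a \<Rightarrow> real"
  assumes m: "f \<in> borel_measurable M" and i4: "integrable M (\<lambda>x. f x ^ 4)" and j: "j \<le> 4"
  shows "integrable M (\<lambda>x. f x ^ j)"
proof (rule Bochner_Integration.integrable_bound[where f="\<lambda>x. 1 + f x ^ 4"])
  show "integrable M (\<lambda>x. 1 + f x ^ 4)" using i4 by simp
  show "(\<lambda>x. f x ^ j) \<in> borel_measurable M" using m by measurable
  show "AE x in M. norm (f x ^ j) \<le> norm (1 + f x ^ 4)"
  proof (rule AE_I2)
    fix x
    have "\<bar>f x\<bar> ^ j \<le> 1 + \<bar>f x\<bar> ^ 4"
    proof (cases "\<bar>f x\<bar> \<le> 1")
      case True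
      then have "\<bar>f x\<bar> ^ j \<le> 1" by (simp add: power_le_one)
      then show ?thesis by (smt (verit) zero_le_power abs_ge_zero)
    next
      case False
      then have "\<bar>f x\<bar> ^ j \<le> \<bar>f x\<bar> ^ 4" by (intro power_increasing j) auto
      then show ?thesis by simp
    qed
    moreover have "\<bar>f x\<bar> ^ 4 = f x ^ 4" by (simp add: power_even_abs_numeral)
    moreover have "norm (f x ^ j) = \<bar>f x\<bar> ^ j" by (simp add: power_abs)
    moreover have "norm (1 + f x ^ 4) = 1 + f x ^ 4" by simp
    ultimately show "norm (f x ^ j) \<le> norm (1 + f x ^ 4)" by simp
  qed
qed

lemma pow4_sum_le: "((s::real) + z) ^ 4 \<le> 8 * (s ^ 4 + z ^ 4)"
proof -
  have "0 \<le> (s - z)^2 * (7 * s^2 + 10 * s * z + 7 * z^2)"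
  proof -
    have "7 * s^2 + 10 * s * z + 7 * z^2 = 5 * (s+z)^2 + 2 * s^2 + 2 * z^2"
      by (simp add: power2_eq_square algebra_simps)
    moreover have "0 \<le> 5 * (s+z)^2 + 2 * s^2 + 2 * z^2" by (intro add_nonneg_nonneg) auto
    ultimately have "0 \<le> 7 * s^2 + 10 * s * z + 7 * z^2" by linarith
    then show ?thesis by simp
  qed
  then show ?thesis by (simp add: algebra_simps power2_eq_square power4_eq_xxxx) 
qed

lemma p4: "((y::real) + s)^4 = y ^ 4 + 4 * (y ^ 3 * s ^ 1) + 6 * (y ^ 2 * s ^ 2) + 4 * (y ^ 1 * s ^ 3) + s ^ 4"
  by algebra
lemma p2: "((y::real) + s)^2 = y ^ 2 + 2 * (y ^ 1 * s ^ 1) + s ^ 2"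
  by algebra

lemma (in prob_space) slln4_moments:
  fixes Z :: "nat \<Rightarrow> 'a \<Rightarrow> real"
  assumes ind: "indep_vars (\<lambda>_. borel) Z {1..}"
   and int4: "\<And>k. k\<ge>1 \<Longrightarrow> integrable M (\<lambda>\<omega>. Z k \<omega> ^ 4)"
   and mean0: "\<And>k. k\<ge>1 \<Longrightarrow> expectation (Z k) = 0"
   and b2: "\<And>k. k\<ge>1 \<Longrightarrow> expectation (\<lambda>\<omega>. Z k \<omega> ^ 2) \<le> B"
   and b4: "\<And>k. k\<ge>1 \<Longrightarrow> expectation (\<lambda>\<omega>. Z k \<omega> ^ 4) \<le> B"
  shows "integrable M (\<lambda>\<omega>. (\<Sum>k\<in>{1..n}. Z k \<omega>)^4) \<and>
     expectation (\<lambda>\<omega>. (\<Sum>k\<in>{1..n}. Z k \<omega>)^2) \<le> real n * B \<and>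
     expectation (\<lambda>\<omega>. (\<Sum>k\<in>{1..n}. Z k \<omega>)^4) \<le> real n * B + 3 * (real n)^2 * B^2"
proof (induction n)
  case 0
  then show ?case by simp
next
  case (Suc n)
  have rv: "\<And>k. k \<ge> 1 \<Longrightarrow> Z k \<in> borel_measurable M"
    using ind by (auto simp: indep_vars_def)
  define S where "S = (\<lambda>\<omega>. \<Sum>k\<in>{1..n}. Z k \<omega>)"
  define Y where "Y = Z (Suc n)"
  have Sm[measurable]: "S \<in> borel_measurable M" unfolding S_def using rv by auto
  have Ym[measurable]: "Y \<in> borel_measurable M" unfolding Y_def using rv by auto
  have IH: "integrable M (\<lambda>\<omega>. S \<omega> ^ 4) \<and> expectation (\<lambda>\<omega>. S \<omega> ^ 2) \<le> n * B \<and>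
      expectation (\<lambda>\<omega>. S \<omega> ^ 4) \<le> real n * B + 3 * (real n)^2 * B^2"
    unfolding S_def by (rule Suc.IH)
  have iS4: "integrable M (\<lambda>\<omega>. S \<omega> ^ 4)" using IH by (rule conjunct1)
  have eS2: "expectation (\<lambda>\<omega>. S \<omega> ^ 2) \<le> real n * B" using IH by (rule conjunct2[THEN conjunct1])
  have eS4: "expectation (\<lambda>\<omega>. S \<omega> ^ 4) \<le> real n * B + 3 * (real n)^2 * B^2" using IH by (rule conjunct2[THEN conjunct2])
  have iY4: "integrable M (\<lambda>\<omega>. Y \<omega> ^ 4)" unfolding Y_def using int4 by auto
  have iS: "\<And>j. j \<le> 4 \<Longrightarrow> integrable M (\<lambda>\<omega>. S \<omega> ^ j)" by (rule integrable_pow_le4[OF Sm iS4])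
  have iY: "\<And>j. j \<le> 4 \<Longrightarrow> integrable M (\<lambda>\<omega>. Y \<omega> ^ j)" by (rule integrable_pow_le4[OF Ym iY4])
  have indYS: "indep_var borel Y borel S"
    unfolding Y_def S_def
    by (rule indep_vars_sum) (auto intro: indep_vars_subset[OF ind])
  have indj: "indep_var borel (\<lambda>\<omega>. Y \<omega> ^ a) borel (\<lambda>\<omega>. S \<omega> ^ b)" for a b
    using indep_var_compose[OF indYS, of "\<lambda>z. z ^ a" borel "\<lambda>s. s ^ b" borel]
    by (simp add: o_def)
  have prod: "a \<le> 4 \<Longrightarrow> b \<le> 4 \<Longrightarrow> integrable M (\<lambda>\<omega>. Y \<omega> ^ a * S \<omega> ^ b) \<and>
      expectation (\<lambda>\<omega>. Y \<omega> ^ a * S \<omega> ^ b) = expectation (\<lambda>\<omega>. Y \<omega> ^ a) * expectation (\<lambda>\<omega>. S \<omega> ^ b)" for a b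
    using indep_var_integrable[OF indj iY iS] indep_var_lebesgue_integral[OF indj iY iS] by auto
  have eY: "expectation Y = 0" unfolding Y_def using mean0 by auto
  have eY2: "expectation (\<lambda>\<omega>. Y \<omega> ^ 2) \<le> B" unfolding Y_def using b2 by auto
  have eY4: "expectation (\<lambda>\<omega>. Y \<omega> ^ 4) \<le> B" unfolding Y_def using b4 by auto
  have B0: "0 \<le> B"
  proof -
    have "0 \<le> expectation (\<lambda>\<omega>. Y \<omega> ^ 2)" by (rule integral_nonneg_AE) auto
    then show ?thesis using eY2 by linarith
  qed
  have sum_eq: "\<And>\<omega>. (\<Sum>k\<in>{1..Suc n}. Z k \<omega>) = Y \<omega> + S \<omega>"
    unfolding S_def Y_def by (auto simp: add.commute)
  have i4: "integrable M (\<lambda>\<omega>. (Y \<omega> + S \<omega>)^4)"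
  proof (rule Bochner_Integration.integrable_bound[where f="\<lambda>\<omega>. 8 * (Y \<omega> ^ 4 + S \<omega> ^ 4)"])
    show "integrable M (\<lambda>\<omega>. 8 * (Y \<omega> ^ 4 + S \<omega> ^ 4))" using iY4 iS4 by auto
    show "AE x in M. norm ((Y x + S x) ^ 4) \<le> norm (8 * (Y x ^ 4 + S x ^ 4))"
      using pow4_sum_le by (auto simp: abs_of_nonneg)
  qed measurable
  have e2: "expectation (\<lambda>\<omega>. (Y \<omega> + S \<omega>)^2) =
     expectation (\<lambda>\<omega>. Y \<omega> ^ 2) + 2 * (expectation (\<lambda>\<omega>. Y \<omega> ^ 1 * S \<omega> ^ 1)) + expectation (\<lambda>\<omega>. S \<omega> ^ 2)"
  proof -
    have "(\<lambda>\<omega>. (Y \<omega> + S \<omega>)^2) = (\<lambda>\<omega>. Y \<omega> ^ 2 + 2 * (Y \<omega> ^ 1 * S \<omega> ^ 1) + S \<omega> ^ 2)"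
      by (simp only: p2)
    then show ?thesis
      using iY[of 2] iS[of 2] prod[of 1 1] by simp
  qed
  have e4: "expectation (\<lambda>\<omega>. (Y \<omega> + S \<omega>)^4) =
     expectation (\<lambda>\<omega>. Y \<omega> ^ 4) + 4 * (expectation (\<lambda>\<omega>. Y \<omega> ^ 3 * S \<omega> ^ 1))
      + 6 * (expectation (\<lambda>\<omega>. Y \<omega> ^ 2 * S \<omega> ^ 2)) + 4 * (expectation (\<lambda>\<omega>. Y \<omega> ^ 1 * S \<omega> ^ 3))
      + expectation (\<lambda>\<omega>. S \<omega> ^ 4)"
  proof -
    have "(\<lambda>\<omega>. (Y \<omega> + S \<omega>)^4) = (\<lambda>\<omega>. Y \<omega> ^ 4 + 4 * (Y \<omega> ^ 3 * S \<omega> ^ 1)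
      + 6 * (Y \<omega> ^ 2 * S \<omega> ^ 2) + 4 * (Y \<omega> ^ 1 * S \<omega> ^ 3) + S \<omega> ^ 4)"
      by (simp only: p4)
    then show ?thesis
      using iY[of 4] iS[of 4] prod[of 3 1] prod[of 2 2] prod[of 1 3] by simp
  qed
  have iZ1: "k \<in> {1..n} \<Longrightarrow> integrable M (Z k)" for k
    using integrable_pow_le4[OF rv int4, of k 1] by simp
  have eS0: "expectation S = 0"
    unfolding S_def using iZ1 mean0 by (subst Bochner_Integration.integral_sum) auto
  have ES1: "expectation (\<lambda>\<omega>. S \<omega> ^ 1) = 0" using eS0 by simp
  have EY1: "expectation (\<lambda>\<omega>. Y \<omega> ^ 1) = 0" using eY by simp
  have eSn: "expectation (\<lambda>\<omega>. S \<omega> ^ 2) \<ge> 0" by (rule integral_nonneg_AE) auto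
  have eY2n: "expectation (\<lambda>\<omega>. Y \<omega> ^ 2) \<ge> 0" by (rule integral_nonneg_AE) auto
  have r2: "expectation (\<lambda>\<omega>. (Y \<omega> + S \<omega>)^2) \<le> Suc n * B"
    using e2 prod[of 1 1] EY1 eY2 eS2 by (simp add: algebra_simps)
  have "expectation (\<lambda>\<omega>. Y \<omega> ^ 2 * S \<omega> ^ 2) \<le> B * (n * B)"
    using prod[of 2 2] eY2 eS2 eSn eY2n B0 by (simp add: mult_mono)
  then have r4: "expectation (\<lambda>\<omega>. (Y \<omega> + S \<omega>)^4) \<le> real (Suc n) * B + 3 * (real (Suc n))^2 * B^2"
  proof -
    let ?E = "expectation (\<lambda>\<omega>. (Y \<omega> + S \<omega>)^4)"
    have "?E \<le> B + 6*(B*(n*B)) + (n*B + 3*(real n)^2*B^2)"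
      using e4 prod[of 3 1] prod[of 1 3] EY1 ES1 eY4 eS4 \<open>expectation (\<lambda>\<omega>. Y \<omega> ^ 2 * S \<omega> ^ 2) \<le> B * (n * B)\<close>
      by simp
    moreover have "B + 6*(B*(n*B)) + (n*B + 3*(real n)^2*B^2) \<le> real (Suc n) * B + 3 * (real (Suc n))^2 * B^2"
      using mult_nonneg_nonneg[OF B0 B0] by (simp add: power2_eq_square algebra_simps)
    ultimately show ?thesis by linarith
  qed
  show ?case unfolding sum_eq using i4 r2 r4 by (simp only:)
qed

lemma pow4_tendsto_zero:
  fixes y :: "nat \<Rightarrow> real"
  assumes "(\<lambda>n. y n ^ 4) \<longlonglongrightarrow> 0"
  shows "y \<longlonglongrightarrow> 0"
proof -
  have "(\<lambda>n. root 4 (y n ^ 4)) \<longlonglongrightarrow> root 4 0"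
    by (rule tendsto_real_root[OF assms])
  moreover have "root 4 (y n ^ 4) = \<bar>y n\<bar>" for n
  proof -
    have "y n ^ 4 = \<bar>y n\<bar> ^ 4" by (simp add: power_even_abs_numeral)
    moreover have "root 4 (\<bar>y n\<bar> ^ 4) = \<bar>y n\<bar>" by (rule real_root_power_cancel) auto
    ultimately show ?thesis by simp
  qed
  ultimately have "(\<lambda>n. \<bar>y n\<bar>) \<longlonglongrightarrow> 0" by simp
  then show ?thesis by (simp add: tendsto_rabs_zero_iff)
qed

lemma (in prob_space) slln4:
  fixes Z :: "nat \<Rightarrow> 'a \<Rightarrow> real"
  assumes ind: "indep_vars (\<lambda>_. borel) Z {1..}"
   and int4: "\<And>k. k\<ge>1 \<Longrightarrow> integrable M (\<lambda>\<omega>. Z k \<omega> ^ 4)"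
   and mean0: "\<And>k. k\<ge>1 \<Longrightarrow> expectation (Z k) = 0"
   and b2: "\<And>k. k\<ge>1 \<Longrightarrow> expectation (\<lambda>\<omega>. Z k \<omega> ^ 2) \<le> B"
   and b4: "\<And>k. k\<ge>1 \<Longrightarrow> expectation (\<lambda>\<omega>. Z k \<omega> ^ 4) \<le> B"
  shows "AE \<omega> in M. (\<lambda>n. (\<Sum>k\<in>{1..n}. Z k \<omega>) / real n) \<longlonglongrightarrow> 0"
proof -
  define S where "S n \<omega> = (\<Sum>k\<in>{1..n}. Z k \<omega>)" for n \<omega>
  have rv[measurable]: "\<And>k. k \<ge> 1 \<Longrightarrow> Z k \<in> borel_measurable M"
    using ind by (auto simp: indep_vars_def)
  have Sm[measurable]: "S n \<in> borel_measurable M" for n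
    unfolding S_def by (intro borel_measurable_sum) auto
  have B0: "0 \<le> B"
  proof -
    have "0 \<le> expectation (\<lambda>\<omega>. Z 1 \<omega> ^ 2)" by (rule integral_nonneg_AE) auto
    then show ?thesis using b2[of 1] by linarith
  qed
  define C where "C = B + 3 * B^2"
  have C0: "0 \<le> C" unfolding C_def using B0 by simp
  have mom: "integrable M (\<lambda>\<omega>. S n \<omega> ^ 4) \<and> expectation (\<lambda>\<omega>. S n \<omega> ^ 4) \<le> real n * B + 3 * (real n)^2 * B^2" for n
    using slln4_moments[OF ind int4 mean0 b2 b4, of n] unfolding S_def by blast
  have int: "integrable M (\<lambda>\<omega>. (S n \<omega> / real n) ^ 4)" for n
    using mom[of n] by (simp add: power_divide)
  have bound: "expectation (\<lambda>\<omega>. (S n \<omega> / real n) ^ 4) \<le> C * inverse (real n ^ 2)" for n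
  proof (cases "n = 0")
    case True then show ?thesis by simp
  next
    case False
    then have n1: "real n \<ge> 1" by simp
    have "expectation (\<lambda>\<omega>. (S n \<omega> / real n) ^ 4) = expectation (\<lambda>\<omega>. S n \<omega> ^ 4) / real n ^ 4"
      by (simp add: power_divide)
    also have "\<dots> \<le> (real n * B + 3 * (real n)^2 * B^2) / real n ^ 4"
      using mom[of n] by (intro divide_right_mono) auto
    also have "\<dots> = B / real n ^ 3 + 3 * B^2 / real n ^ 2"
      using n1 by (simp add: field_simps power2_eq_square power3_eq_cube power4_eq_xxxx)
    also have "\<dots> \<le> B / real n ^ 2 + 3 * B^2 / real n ^ 2"
    proof -
      have "real n ^ 2 \<le> real n ^ 3" using n1 by (intro power_increasing) auto
      then have "B / real n ^ 3 \<le> B / real n ^ 2"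
        using B0 n1 by (intro divide_left_mono) auto
      then show ?thesis by simp
    qed
    also have "\<dots> = C * inverse (real n ^ 2)" unfolding C_def by (simp add: distrib_right divide_inverse)
    finally show ?thesis .
  qed
  have summ: "summable (\<lambda>n. C * inverse (real n ^ 2))"
    by (intro summable_mult inverse_power_summable) auto
  have "(\<integral>\<^sup>+\<omega>. (\<Sum>n. ennreal ((S n \<omega> / real n) ^ 4)) \<partial>M) = (\<Sum>n. \<integral>\<^sup>+\<omega>. ennreal ((S n \<omega> / real n) ^ 4) \<partial>M)"
    by (rule nn_integral_suminf) auto
  also have "\<dots> = (\<Sum>n. ennreal (expectation (\<lambda>\<omega>. (S n \<omega> / real n) ^ 4)))"
    using int by (subst nn_integral_eq_integral) auto
  also have "\<dots> \<le> (\<Sum>n. ennreal (C * inverse (real n ^ 2)))"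
    using bound by (intro suminf_le) (auto intro: ennreal_leI)
  also have "\<dots> = ennreal (\<Sum>n. C * inverse (real n ^ 2))"
    using summ C0 by (intro suminf_ennreal2) auto
  finally have le: "(\<integral>\<^sup>+\<omega>. (\<Sum>n. ennreal ((S n \<omega> / real n) ^ 4)) \<partial>M) \<le> ennreal (\<Sum>n. C * inverse (real n ^ 2))" .
  have fin: "(\<integral>\<^sup>+\<omega>. (\<Sum>n. ennreal ((S n \<omega> / real n) ^ 4)) \<partial>M) \<noteq> \<infinity>"
  proof
    assume "(\<integral>\<^sup>+\<omega>. (\<Sum>n. ennreal ((S n \<omega> / real n) ^ 4)) \<partial>M) = \<infinity>"
    with le show False by (simp add: top_unique)
  qed
  have "AE \<omega> in M. (\<Sum>n. ennreal ((S n \<omega> / real n) ^ 4)) \<noteq> \<infinity>"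
    by (rule nn_integral_PInf_AE[OF _ fin]) measurable
  then show ?thesis
  proof (rule AE_mp, intro AE_I2 impI)
    fix \<omega> assume "(\<Sum>n. ennreal ((S n \<omega> / real n) ^ 4)) \<noteq> \<infinity>"
    then have "summable (\<lambda>n. (S n \<omega> / real n) ^ 4)"
      by (intro summable_suminf_not_top) auto
    then have "(\<lambda>n. (S n \<omega> / real n) ^ 4) \<longlonglongrightarrow> 0" by (rule summable_LIMSEQ_zero)
    then have "(\<lambda>n. S n \<omega> / real n) \<longlonglongrightarrow> 0" by (rule pow4_tendsto_zero)
    then show "(\<lambda>n. (\<Sum>k\<in>{1..n}. Z k \<omega>) / real n) \<longlonglongrightarrow> 0"
      unfolding S_def .
  qed
qed



definition l1 :: "real^'d \<Rightarrow> real" where "l1 x = (\<Sum>i\<in>UNIV. \<bar>x$i\<bar>)"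
definition pbound :: "(real^'d \<Rightarrow> real) \<Rightarrow> bool" where
  "pbound g \<longleftrightarrow> (\<exists>C r. 0 \<le> r \<and> (\<forall>x. \<bar>g x\<bar> \<le> C * exp (r * l1 x)))"
definition sv :: "('d \<Rightarrow> bool) \<Rightarrow> real^'d" where "sv b = (\<chi> i. if b i then 1 else -1)"

lemma l1_nonneg: "0 \<le> l1 x" unfolding l1_def by (simp add: sum_nonneg)
lemma norm_le_l1: "norm x \<le> l1 x" unfolding l1_def by (rule norm_le_l1_cart)
lemma l1_add: "l1 (x + y) \<le> l1 x + l1 y"
  unfolding l1_def by (simp add: sum.distrib[symmetric] sum_mono abs_triangle_ineq)

lemma pboundI: "0 \<le> r \<Longrightarrow> (\<And>x. \<bar>g x\<bar> \<le> C * exp (r * l1 x)) \<Longrightarrow> pbound g"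
  unfolding pbound_def by blast

lemma pboundE:
  fixes g :: "real^'d \<Rightarrow> real"
  assumes "pbound g"
  obtains r C where "0 \<le> r" "0 \<le> C" "\<And>x. \<bar>g x\<bar> \<le> C * exp (r * l1 x)"
proof -
  obtain C r where r: "0 \<le> r" and b: "\<And>x. \<bar>g x\<bar> \<le> C * exp (r * l1 x)"
    using assms unfolding pbound_def by blast
  have "0 \<le> \<bar>g 0\<bar>" by simp
  then have "0 \<le> C * exp (r * l1 (0::real^'d))" using b[of 0] by linarith
  then have "0 \<le> C" by (simp add: zero_le_mult_iff)
  then show ?thesis using that r b by blast
qed

lemma pbound_const: "pbound (\<lambda>x. c)"
  by (rule pboundI[of 0 _ "\<bar>c\<bar>"]) auto

lemma pbound_inner: fixes u :: "real^'d" shows "pbound (\<lambda>x. x \<bullet> u)"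
proof (rule pboundI[of 1 _ "norm u"])
  fix x :: "real^'d"
  have "\<bar>x \<bullet> u\<bar> \<le> norm x * norm u" by (rule Cauchy_Schwarz_ineq2)
  also have "\<dots> \<le> l1 x * norm u" by (intro mult_right_mono norm_le_l1) auto
  also have "\<dots> \<le> exp (l1 x) * norm u"
  proof -
    have "l1 x \<le> exp (l1 x)" using exp_ge_add_one_self[of "l1 x"] by linarith
    then show ?thesis by (intro mult_right_mono) auto
  qed
  finally show "\<bar>x \<bullet> u\<bar> \<le> norm u * exp (1 * l1 x)" by (simp add: mult.commute)
qed simp

lemma pbound_mult: fixes f g :: "real^'d \<Rightarrow> real" assumes "pbound f" "pbound g" shows "pbound (\<lambda>x. f x * g x)"
proof -
  obtain r1 C1 where 1: "0 \<le> r1" "0 \<le> C1" "\<And>x. \<bar>f x\<bar> \<le> C1 * exp (r1 * l1 x)"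
    using assms(1) by (rule pboundE) blast
  obtain r2 C2 where 2: "0 \<le> r2" "0 \<le> C2" "\<And>x. \<bar>g x\<bar> \<le> C2 * exp (r2 * l1 x)"
    using assms(2) by (rule pboundE) blast
  show ?thesis
  proof (rule pboundI[of "r1 + r2" _ "C1 * C2"])
    fix x
    have "\<bar>f x * g x\<bar> = \<bar>f x\<bar> * \<bar>g x\<bar>" by (simp add: abs_mult)
    also have "\<dots> \<le> (C1 * exp (r1 * l1 x)) * (C2 * exp (r2 * l1 x))"
      using 1 2 by (intro mult_mono) auto
    also have "\<dots> = C1 * C2 * exp ((r1 + r2) * l1 x)"
      by (simp add: distrib_right exp_add)
    finally show "\<bar>f x * g x\<bar> \<le> C1 * C2 * exp ((r1 + r2) * l1 x)" .
  qed (use 1 2 in auto)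
qed

lemma pbound_add: fixes f g :: "real^'d \<Rightarrow> real" assumes "pbound f" "pbound g" shows "pbound (\<lambda>x. f x + g x)"
proof -
  obtain r1 C1 where 1: "0 \<le> r1" "0 \<le> C1" "\<And>x. \<bar>f x\<bar> \<le> C1 * exp (r1 * l1 x)"
    using assms(1) by (rule pboundE) blast
  obtain r2 C2 where 2: "0 \<le> r2" "0 \<le> C2" "\<And>x. \<bar>g x\<bar> \<le> C2 * exp (r2 * l1 x)"
    using assms(2) by (rule pboundE) blast
  show ?thesis
  proof (rule pboundI[of "max r1 r2" _ "C1 + C2"])
    fix x :: "real^'d"
    have e1: "exp (r1 * l1 x) \<le> exp (max r1 r2 * l1 x)"
      using l1_nonneg[of x] by (simp add: mult_right_mono)
    have e2: "exp (r2 * l1 x) \<le> exp (max r1 r2 * l1 x)"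
      using l1_nonneg[of x] by (simp add: mult_right_mono)
    have "\<bar>f x + g x\<bar> \<le> \<bar>f x\<bar> + \<bar>g x\<bar>" by (rule abs_triangle_ineq)
    also have "\<dots> \<le> C1 * exp (r1 * l1 x) + C2 * exp (r2 * l1 x)" using 1 2 by (intro add_mono) auto
    also have "\<dots> \<le> C1 * exp (max r1 r2 * l1 x) + C2 * exp (max r1 r2 * l1 x)"
      using 1 2 e1 e2 by (intro add_mono mult_left_mono) auto
    finally show "\<bar>f x + g x\<bar> \<le> (C1 + C2) * exp (max r1 r2 * l1 x)" by (simp add: distrib_right)
  qed (use 1 2 in auto)
qed

lemma pbound_cmult: "pbound f \<Longrightarrow> pbound (\<lambda>x. c * f x)"
  using pbound_mult[OF pbound_const] by blast

lemma pbound_minus: "pbound f \<Longrightarrow> pbound (\<lambda>x. - f x)"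
  unfolding pbound_def by simp

lemma pbound_diff: "pbound f \<Longrightarrow> pbound g \<Longrightarrow> pbound (\<lambda>x. f x - g x)"
  using pbound_add[OF _ pbound_minus] by simp

lemma pbound_abs: "pbound f \<Longrightarrow> pbound (\<lambda>x. \<bar>f x\<bar>)"
  unfolding pbound_def by simp

lemma pbound_power: "pbound f \<Longrightarrow> pbound (\<lambda>x. f x ^ n)"
  by (induction n) (auto intro: pbound_mult pbound_const)

lemma pbound_sum: "finite I \<Longrightarrow> (\<And>i. i \<in> I \<Longrightarrow> pbound (f i)) \<Longrightarrow> pbound (\<lambda>x. \<Sum>i\<in>I. f i x)"
  by (induction I rule: finite_induct) (auto intro: pbound_add pbound_const)

lemma pbound_exp_inner: fixes v :: "real^'d" shows "pbound (\<lambda>x. exp (x \<bullet> v))"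
proof (rule pboundI[of "norm v" _ 1])
  fix x :: "real^'d"
  have "x \<bullet> v \<le> norm x * norm v" by (metis Cauchy_Schwarz_ineq2 abs_le_D1)
  also have "\<dots> \<le> norm v * l1 x" by (metis mult.commute mult_right_mono norm_ge_zero norm_le_l1)
  finally show "\<bar>exp (x \<bullet> v)\<bar> \<le> 1 * exp (norm v * l1 x)" by simp
qed simp

lemma pbound_exp_abs_inner: fixes v :: "real^'d" shows "pbound (\<lambda>x. exp \<bar>x \<bullet> v\<bar>)"
proof (rule pboundI[of "norm v" _ 1])
  fix x :: "real^'d"
  have "\<bar>x \<bullet> v\<bar> \<le> norm x * norm v" by (rule Cauchy_Schwarz_ineq2)
  also have "\<dots> \<le> norm v * l1 x" by (metis mult.commute mult_right_mono norm_ge_zero norm_le_l1)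
  finally show "\<bar>exp \<bar>x \<bullet> v\<bar>\<bar> \<le> 1 * exp (norm v * l1 x)" by simp
qed simp

lemma pbound_shift: assumes "pbound f" shows "pbound (\<lambda>x. f (x + a))"
proof -
  obtain r C where 1: "0 \<le> r" "0 \<le> C" "\<And>x. \<bar>f x\<bar> \<le> C * exp (r * l1 x)"
    using assms by (rule pboundE) blast
  show ?thesis
  proof (rule pboundI[of r _ "C * exp (r * l1 a)"])
    fix x
    have "\<bar>f (x + a)\<bar> \<le> C * exp (r * l1 (x + a))" by (rule 1)
    also have "\<dots> \<le> C * exp (r * (l1 x + l1 a))"
      using 1 l1_add[of x a] by (intro mult_left_mono) (auto intro: mult_left_mono)
    also have "\<dots> = C * exp (r * l1 a) * exp (r * l1 x)" by (simp add: distrib_left exp_add)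
    finally show "\<bar>f (x + a)\<bar> \<le> C * exp (r * l1 a) * exp (r * l1 x)" .
  qed (use 1 in auto)
qed

lemma exp_l1_le:
  fixes x :: "real^'d"
  shows "exp (r * l1 x) \<le> (\<Sum>b\<in>UNIV. exp (x \<bullet> (r *\<^sub>R sv b)))"
proof -
  define b0 where "b0 = (\<lambda>i. x$i \<ge> 0)"
  have "x \<bullet> sv b0 = l1 x"
    unfolding inner_vec_def sv_def l1_def b0_def by (intro sum.cong) auto
  then have "exp (r * l1 x) = exp (x \<bullet> (r *\<^sub>R sv b0))" by simp
  also have "\<dots> \<le> (\<Sum>b\<in>UNIV. exp (x \<bullet> (r *\<^sub>R sv b)))"
    by (rule member_le_sum) auto
  finally show ?thesis .
qed

lemma mvm_measurable[measurable]: "(\<lambda>x. (A::real^'n^'m) *v x) \<in> borel_measurable borel"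
  by (rule borel_measurable_continuous_onI) (rule matrix_vector_mult_linear_continuous_on)

lemma lborel_distr_uminus_euclid: "distr lborel borel uminus = (lborel :: 'a::euclidean_space measure)"
proof -
  have "(lborel :: 'a measure) = density (distr lborel borel (\<lambda>x. 0 + (-1) *\<^sub>R x)) (\<lambda>_. \<bar>-1::real\<bar>^DIM('a))"
    by (rule lborel_affine) simp
  then show ?thesis by (simp add: density_1)
qed

lemma lborel_integral_shift:
  fixes f :: "'a::euclidean_space \<Rightarrow> real"
  assumes [measurable]: "f \<in> borel_measurable borel"
  shows "(\<integral>x. f x \<partial>lborel) = (\<integral>y. f (a + y) \<partial>lborel)"
proof -
  have "(\<integral>x. f x \<partial>lborel) = (\<integral>x. f x \<partial>distr lborel borel ((+) a))"
    by (simp add: lborel_distr_plus)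
  also have "\<dots> = (\<integral>y. f (a + y) \<partial>lborel)" by (subst integral_distr) auto
  finally show ?thesis .
qed

lemma lborel_nn_integral_shift:
  fixes f :: "'a::euclidean_space \<Rightarrow> ennreal"
  assumes [measurable]: "f \<in> borel_measurable borel"
  shows "(\<integral>\<^sup>+x. f x \<partial>lborel) = (\<integral>\<^sup>+y. f (a + y) \<partial>lborel)"
proof -
  have "(\<integral>\<^sup>+x. f x \<partial>lborel) = (\<integral>\<^sup>+x. f x \<partial>distr lborel borel ((+) a))"
    by (simp add: lborel_distr_plus)
  also have "\<dots> = (\<integral>\<^sup>+y. f (a + y) \<partial>lborel)" by (subst nn_integral_distr) auto
  finally show ?thesis .
qed

lemma lborel_integral_neg:
  fixes f :: "'a::euclidean_space \<Rightarrow> real"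
  assumes [measurable]: "f \<in> borel_measurable borel"
  shows "(\<integral>x. f x \<partial>lborel) = (\<integral>y. f (- y) \<partial>lborel)"
proof -
  have "(\<integral>x. f x \<partial>lborel) = (\<integral>x. f x \<partial>distr lborel borel uminus)"
    by (simp add: lborel_distr_uminus_euclid)
  also have "\<dots> = (\<integral>y. f (- y) \<partial>lborel)" by (subst integral_distr) auto
  finally show ?thesis .
qed

lemma abs_exp_sub_one_le: fixes a :: real shows "\<bar>exp a - 1\<bar> \<le> \<bar>a\<bar> * exp \<bar>a\<bar>"
proof (cases "a \<ge> 0")
  case True
  have "exp (-a) \<ge> 1 - a" using exp_ge_add_one_self[of "-a"] by simp
  then have "exp (-a) * exp a \<ge> (1 - a) * exp a" by (simp add: mult_right_mono)
  then have "1 \<ge> exp a - a * exp a" by (simp add: exp_minus_inverse algebra_simps)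
  then show ?thesis using True by simp
next
  case False
  have h1: "1 - exp a \<le> -a" using exp_ge_add_one_self[of a] by linarith
  have h2: "-a \<le> -a * exp (-a)"
    using mult_left_mono[of 1 "exp (-a)" "-a"] False by simp
  have h3: "\<bar>exp a - 1\<bar> = 1 - exp a" using False by simp
  have h4: "\<bar>a\<bar> = -a" using False by simp
  show ?thesis unfolding h3 h4 using h1 h2 by linarith
qed

locale gauss =
  fixes S :: "real^'d^'d"
  assumes symS: "transpose S = S"
    and posS: "\<And>x. x \<noteq> 0 \<Longrightarrow> x \<bullet> (S *v x) > 0"
    and normS: "(\<integral>\<^sup>+x. ennreal (mvn_density S x) \<partial>lborel) = 1"
begin

abbreviation "p \<equiv> mvn_density S"
definition "P = matrix_inv S"
definition "Mg v = exp ((v \<bullet> (S *v v)) / 2)"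

lemma inj_S: "inj ((*v) S)"
proof (rule injI)
  fix x y assume "S *v x = S *v y"
  then have "S *v (x - y) = 0" by (simp add: matrix_vector_mult_diff_distrib)
  then have "\<not> (x - y \<noteq> 0)" using posS[of "x - y"] by auto
  then show "x = y" by simp
qed

lemma invS: "invertible S"
  using inj_S invertible_left_inverse matrix_left_invertible_injective by blast

lemma SP: "S ** P = mat 1" and PS: "P ** S = mat 1"
proof -
  have "\<exists>A'. S ** A' = mat 1 \<and> A' ** S = mat 1" using invS unfolding invertible_def .
  then have "S ** P = mat 1 \<and> P ** S = mat 1"
    unfolding P_def matrix_inv_def by (rule someI_ex)
  then show "S ** P = mat 1" "P ** S = mat 1" by auto
qed

lemma symP: "transpose P = P"
proof -
  have "transpose P ** S = mat 1"
    using arg_cong[OF SP, of transpose] by (simp add: matrix_transpose_mul symS)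
  have "transpose P = transpose P ** (S ** P)" by (simp add: SP)
  also have "\<dots> = (transpose P ** S) ** P" by (simp add: matrix_mul_assoc)
  also have "\<dots> = P" using \<open>transpose P ** S = mat 1\<close> by simp
  finally show ?thesis .
qed

lemma inner_sym_mat: "transpose (A::real^'d^'d) = A \<Longrightarrow> x \<bullet> (A *v y) = (A *v x) \<bullet> y"
  by (metis dot_lmul_matrix transpose_matrix_vector)

lemma inner_P: "x \<bullet> (P *v y) = (P *v x) \<bullet> y" by (rule inner_sym_mat[OF symP])
lemma inner_S: "x \<bullet> (S *v y) = (S *v x) \<bullet> y" by (rule inner_sym_mat[OF symS])

lemma PSv: "P *v (S *v v) = v" by (simp add: matrix_vector_mul_assoc PS)

lemma quad_shift:
  "(x - S *v v) \<bullet> (P *v (x - S *v v)) = x \<bullet> (P *v x) - 2 * (x \<bullet> v) + v \<bullet> (S *v v)"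
proof -
  have a: "(S *v v) \<bullet> (P *v x) = v \<bullet> x" by (metis PSv inner_P inner_commute)
  show ?thesis
    by (simp add: matrix_vector_mult_diff_distrib inner_diff_left inner_diff_right PSv a inner_commute)
qed

lemma p_meas[measurable]: "p \<in> borel_measurable borel"
  unfolding mvn_density_def by measurable

lemma den_pos: "0 < sqrt ((2 * pi) ^ CARD('d) * det S)"
proof (rule ccontr)
  assume "\<not> ?thesis"
  then have "mvn_density S x \<le> 0" for x
    unfolding mvn_density_def by (intro divide_nonneg_nonpos) auto
  then have "ennreal (mvn_density S x) = 0" for x by (simp add: ennreal_neg)
  then show False using normS by simp
qed

lemma p_pos: "0 < p x"
  using den_pos unfolding mvn_density_def by simp

lemma p_nonneg: "0 \<le> p x" using p_pos[of x] by simp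

lemma p_shift: "p x * exp (x \<bullet> v) = Mg v * p (x - S *v v)"
proof -
  have "- (x \<bullet> (P *v x)) / 2 + x \<bullet> v = v \<bullet> (S *v v) / 2 + - ((x - S *v v) \<bullet> (P *v (x - S *v v))) / 2"
    unfolding quad_shift by (simp add: field_simps)
  then have "exp (- (x \<bullet> (P *v x)) / 2) * exp (x \<bullet> v) = exp (v \<bullet> (S *v v) / 2) * exp (- ((x - S *v v) \<bullet> (P *v (x - S *v v))) / 2)"
    by (simp add: exp_add[symmetric])
  then show ?thesis unfolding mvn_density_def Mg_def P_def by (simp add: field_simps)
qed

lemma p_even: "p (- x) = p x"
  unfolding mvn_density_def by (simp add: vec.neg)

lemma p_integrable: "integrable lborel p"
  using normS by (intro integrableI_nonneg) (auto simp: p_nonneg)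

lemma p_integral: "(\<integral>x. p x \<partial>lborel) = 1"
proof -
  have "ennreal (\<integral>x. p x \<partial>lborel) = 1"
    using normS nn_integral_eq_integral[OF p_integrable] p_nonneg by simp
  then show ?thesis by simp
qed

lemma tilt:
  assumes [measurable]: "g \<in> borel_measurable borel"
  shows "(\<integral>x. p x * (exp (x \<bullet> v) * g x) \<partial>lborel) = Mg v * (\<integral>y. p y * g (y + S *v v) \<partial>lborel)"
proof -
  have "(\<integral>x. p x * (exp (x \<bullet> v) * g x) \<partial>lborel) = (\<integral>x. Mg v * (p (x - S *v v) * g x) \<partial>lborel)"
    by (intro Bochner_Integration.integral_cong refl) (simp add: mult.assoc[symmetric] p_shift)
  also have "\<dots> = Mg v * (\<integral>x. p (x - S *v v) * g x \<partial>lborel)" by simp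
  also have "(\<integral>x. p (x - S *v v) * g x \<partial>lborel) = (\<integral>y. p (S *v v + y - S *v v) * g (S *v v + y) \<partial>lborel)"
    by (rule lborel_integral_shift) measurable
  also have "\<dots> = (\<integral>y. p y * g (y + S *v v) \<partial>lborel)" by (simp add: add.commute)
  finally show ?thesis .
qed

lemma tilt_nn: "(\<integral>\<^sup>+x. ennreal (p x * exp (x \<bullet> v)) \<partial>lborel) = ennreal (Mg v)"
proof -
  have "(\<integral>\<^sup>+x. ennreal (p x * exp (x \<bullet> v)) \<partial>lborel) = (\<integral>\<^sup>+x. ennreal (Mg v) * ennreal (p (x - S *v v)) \<partial>lborel)"
    by (intro nn_integral_cong) (simp add: p_shift ennreal_mult Mg_def p_nonneg)
  also have "\<dots> = ennreal (Mg v) * (\<integral>\<^sup>+x. ennreal (p (x - S *v v)) \<partial>lborel)"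
    by (rule nn_integral_cmult) measurable
  also have "(\<integral>\<^sup>+x. ennreal (p (x - S *v v)) \<partial>lborel) = (\<integral>\<^sup>+y. ennreal (p (S *v v + y - S *v v)) \<partial>lborel)"
    by (rule lborel_nn_integral_shift) measurable
  also have "\<dots> = 1" using normS by simp
  finally show ?thesis by simp
qed

lemma tilt_integrable: "integrable lborel (\<lambda>x. p x * exp (x \<bullet> v))"
  using tilt_nn[of v] by (intro integrableI_nonneg) (auto simp: p_nonneg)

lemma int_pbound:
  assumes pb: "pbound g" and [measurable]: "g \<in> borel_measurable borel"
  shows "integrable lborel (\<lambda>x. p x * g x)"
proof -
  obtain r C where rC: "0 \<le> r" "0 \<le> C" "\<And>x. \<bar>g x\<bar> \<le> C * exp (r * l1 x)"
    using pb by (rule pboundE) blast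
  have "integrable lborel (\<lambda>x. C * (\<Sum>b\<in>UNIV. p x * exp (x \<bullet> (r *\<^sub>R sv b))))"
  proof (intro integrable_mult_right Bochner_Integration.integrable_sum)
    fix b show "integrable lborel (\<lambda>x. p x * exp (x \<bullet> (r *\<^sub>R sv b)))" by (rule tilt_integrable)
  qed
  then show ?thesis
  proof (rule Bochner_Integration.integrable_bound)
    show "AE x in lborel. norm (p x * g x) \<le> norm (C * (\<Sum>b\<in>UNIV. p x * exp (x \<bullet> (r *\<^sub>R sv b))))"
    proof (intro AE_I2)
      fix x :: "real^'d"
      have "norm (p x * g x) = p x * \<bar>g x\<bar>" using p_nonneg[of x] by (simp add: abs_mult)
      also have "\<dots> \<le> p x * (C * (\<Sum>b\<in>UNIV. exp (x \<bullet> (r *\<^sub>R sv b))))"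
        using rC exp_l1_le[of r x] p_nonneg[of x]
        by (intro mult_left_mono) (auto intro: order_trans mult_left_mono)
      also have "\<dots> = C * (\<Sum>b\<in>UNIV. p x * exp (x \<bullet> (r *\<^sub>R sv b)))"
        by (simp add: sum_distrib_left algebra_simps)
      also have "\<dots> \<le> norm (C * (\<Sum>b\<in>UNIV. p x * exp (x \<bullet> (r *\<^sub>R sv b))))" by simp
      finally show "norm (p x * g x) \<le> norm (C * (\<Sum>b\<in>UNIV. p x * exp (x \<bullet> (r *\<^sub>R sv b))))" .
    qed
  qed measurable
qed

lemma int_inner1: "integrable lborel (\<lambda>x. p x * (x \<bullet> u))"
  by (rule int_pbound[OF pbound_inner]) measurable

lemma mom0: "(\<integral>x. p x \<partial>lborel) = 1" by (rule p_integral)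

lemma mom1: "(\<integral>x. p x * (x \<bullet> u) \<partial>lborel) = 0"
proof -
  have "(\<integral>x. p x * (x \<bullet> u) \<partial>lborel) = (\<integral>y. p (- y) * ((- y) \<bullet> u) \<partial>lborel)"
    by (rule lborel_integral_neg) measurable
  also have "\<dots> = - (\<integral>y. p y * (y \<bullet> u) \<partial>lborel)" by (simp add: p_even)
  finally show ?thesis by simp
qed

lemma mom3: "(\<integral>x. p x * ((x \<bullet> a) * (x \<bullet> b) * (x \<bullet> c)) \<partial>lborel) = 0"
proof -
  have "(\<integral>x. p x * ((x \<bullet> a) * (x \<bullet> b) * (x \<bullet> c)) \<partial>lborel) =
        (\<integral>y. p (- y) * (((- y) \<bullet> a) * ((- y) \<bullet> b) * ((- y) \<bullet> c)) \<partial>lborel)"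
    by (rule lborel_integral_neg) measurable
  also have "\<dots> = - (\<integral>y. p y * ((y \<bullet> a) * (y \<bullet> b) * (y \<bullet> c)) \<partial>lborel)" by (simp add: p_even)
  finally show ?thesis by simp
qed

lemma exp_quot_lim:
  fixes y :: real
  shows "(\<lambda>n. (exp (1 / real (Suc n) * y) - 1) / (1 / real (Suc n))) \<longlonglongrightarrow> y"
proof -
  have "((\<lambda>s. exp (s * y)) has_field_derivative y) (at 0)"
    by (auto intro!: derivative_eq_intros)
  then have d: "((\<lambda>h. (exp (h * y) - exp (0 * y)) / (h - 0)) \<longlongrightarrow> y) (at 0)"
    by (simp only: has_field_derivative_iff)
  have f: "filterlim (\<lambda>n. 1 / real (Suc n)) (at 0) sequentially"
    unfolding filterlim_at using LIMSEQ_Suc[OF lim_const_over_n[of 1]] by (auto simp del: of_nat_Suc)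
  show ?thesis using filterlim_compose[OF d f] by simp
qed

lemma mom2: "(\<integral>x. p x * ((x \<bullet> a) * (x \<bullet> b)) \<partial>lborel) = a \<bullet> (S *v b)"
proof -
  define t where "t n = 1 / real (Suc n)" for n
  define G where "G n x = p x * ((x \<bullet> a) * ((exp (t n * (x \<bullet> b)) - 1) / t n))" for n x
  have tpos: "0 < t n" for n unfolding t_def by simp
  have tle: "t n \<le> 1" for n unfolding t_def by simp
  have Gm[measurable]: "G n \<in> borel_measurable borel" for n unfolding G_def by measurable
  have Geq: "(\<integral>x. G n x \<partial>lborel) = Mg (t n *\<^sub>R b) * ((S *v b) \<bullet> a)" for n
  proof -
    have i1: "integrable lborel (\<lambda>x. p x * (exp (x \<bullet> (t n *\<^sub>R b)) * (x \<bullet> a)))"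
      by (rule int_pbound[OF pbound_mult[OF pbound_exp_inner pbound_inner]]) measurable
    have "G n x = (p x * (exp (x \<bullet> (t n *\<^sub>R b)) * (x \<bullet> a)) - p x * (x \<bullet> a)) / t n" for x
      unfolding G_def by (simp add: field_simps)
    then have "(\<integral>x. G n x \<partial>lborel) = ((\<integral>x. p x * (exp (x \<bullet> (t n *\<^sub>R b)) * (x \<bullet> a)) \<partial>lborel) - (\<integral>x. p x * (x \<bullet> a) \<partial>lborel)) / t n"
      using i1 int_inner1[of a] by simp
    also have "(\<integral>x. p x * (exp (x \<bullet> (t n *\<^sub>R b)) * (x \<bullet> a)) \<partial>lborel) =
       Mg (t n *\<^sub>R b) * (\<integral>y. p y * ((y + S *v (t n *\<^sub>R b)) \<bullet> a) \<partial>lborel)"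
      by (rule tilt) measurable
    also have "(\<integral>y. p y * ((y + S *v (t n *\<^sub>R b)) \<bullet> a) \<partial>lborel) =
        (\<integral>y. p y * (y \<bullet> a) + ((S *v (t n *\<^sub>R b)) \<bullet> a) * p y \<partial>lborel)"
      by (simp add: inner_add_left algebra_simps)
    also have "\<dots> = t n * ((S *v b) \<bullet> a)"
      using int_inner1[of a] p_integrable by (simp add: mom1 p_integral matrix_vector_mult_scaleR)
    finally show ?thesis using tpos[of n] mom1[of a] by simp
  qed
  have lim1: "(\<lambda>n. \<integral>x. G n x \<partial>lborel) \<longlonglongrightarrow> (S *v b) \<bullet> a"
  proof -
    have "t \<longlonglongrightarrow> 0" unfolding t_def using LIMSEQ_Suc[OF lim_const_over_n[of 1]] by (simp del: of_nat_Suc)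
    then have "(\<lambda>n. exp ((t n)^2 * (b \<bullet> (S *v b)) / 2)) \<longlonglongrightarrow> exp (0^2 * (b \<bullet> (S *v b)) / 2)"
      by (intro tendsto_intros) auto
    moreover have "Mg (t n *\<^sub>R b) = exp ((t n)^2 * (b \<bullet> (S *v b)) / 2)" for n
      by (simp add: Mg_def matrix_vector_mult_scaleR power2_eq_square)
    ultimately have "(\<lambda>n. Mg (t n *\<^sub>R b)) \<longlonglongrightarrow> 1" by simp
    then have "(\<lambda>n. Mg (t n *\<^sub>R b) * ((S *v b) \<bullet> a)) \<longlonglongrightarrow> 1 * ((S *v b) \<bullet> a)"
      by (intro tendsto_intros)
    then show ?thesis by (simp add: Geq)
  qed
  have lim2: "(\<lambda>n. \<integral>x. G n x \<partial>lborel) \<longlonglongrightarrow> (\<integral>x. p x * ((x \<bullet> a) * (x \<bullet> b)) \<partial>lborel)"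
  proof (rule integral_dominated_convergence[where w="\<lambda>x. p x * (\<bar>x \<bullet> a\<bar> * (\<bar>x \<bullet> b\<bar> * exp \<bar>x \<bullet> b\<bar>))"])
    show "integrable lborel (\<lambda>x. p x * (\<bar>x \<bullet> a\<bar> * (\<bar>x \<bullet> b\<bar> * exp \<bar>x \<bullet> b\<bar>)))"
      by (rule int_pbound[OF pbound_mult[OF pbound_abs[OF pbound_inner] pbound_mult[OF pbound_abs[OF pbound_inner] pbound_exp_abs_inner]]]) measurable
    show "AE x in lborel. (\<lambda>n. G n x) \<longlonglongrightarrow> p x * ((x \<bullet> a) * (x \<bullet> b))"
    proof (intro AE_I2)
      fix x :: "real^'d"
      show "(\<lambda>n. G n x) \<longlonglongrightarrow> p x * ((x \<bullet> a) * (x \<bullet> b))"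
        unfolding G_def t_def by (intro tendsto_intros exp_quot_lim)
    qed
    fix n
    show "AE x in lborel. norm (G n x) \<le> p x * (\<bar>x \<bullet> a\<bar> * (\<bar>x \<bullet> b\<bar> * exp \<bar>x \<bullet> b\<bar>))"
    proof (intro AE_I2)
      fix x :: "real^'d"
      let ?y = "x \<bullet> b"
      have "\<bar>exp (t n * ?y) - 1\<bar> \<le> \<bar>t n * ?y\<bar> * exp \<bar>t n * ?y\<bar>" by (rule abs_exp_sub_one_le)
      also have "\<dots> \<le> t n * (\<bar>?y\<bar> * exp \<bar>?y\<bar>)"
      proof -
        have "\<bar>t n * ?y\<bar> = t n * \<bar>?y\<bar>" using tpos[of n] by (simp add: abs_mult)
        moreover have "t n * \<bar>?y\<bar> \<le> \<bar>?y\<bar>" using tle[of n] tpos[of n]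
          by (simp add: mult_left_le_one_le)
        ultimately have "exp \<bar>t n * ?y\<bar> \<le> exp \<bar>?y\<bar>" by simp
        then show ?thesis using \<open>\<bar>t n * ?y\<bar> = t n * \<bar>?y\<bar>\<close> tpos[of n]
          by (simp add: mult_left_mono mult.assoc)
      qed
      finally have e: "\<bar>(exp (t n * ?y) - 1) / t n\<bar> \<le> \<bar>?y\<bar> * exp \<bar>?y\<bar>"
        using tpos[of n] by (simp add: divide_le_eq mult.commute)
      have "norm (G n x) = p x * (\<bar>x \<bullet> a\<bar> * \<bar>(exp (t n * ?y) - 1) / t n\<bar>)"
        unfolding G_def using p_nonneg[of x] by (simp add: abs_mult)
      also have "\<dots> \<le> p x * (\<bar>x \<bullet> a\<bar> * (\<bar>?y\<bar> * exp \<bar>?y\<bar>))"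
        using e p_nonneg[of x] by (intro mult_left_mono) auto
      finally show "norm (G n x) \<le> p x * (\<bar>x \<bullet> a\<bar> * (\<bar>x \<bullet> b\<bar> * exp \<bar>x \<bullet> b\<bar>))" .
    qed
  qed measurable
  from LIMSEQ_unique[OF lim2 lim1] show ?thesis by (simp add: inner_commute)
qed

lemma int_inner2: "integrable lborel (\<lambda>x. p x * ((x \<bullet> a) * (x \<bullet> b)))"
  by (rule int_pbound[OF pbound_mult[OF pbound_inner pbound_inner]]) measurable

lemma int_inner3: "integrable lborel (\<lambda>x. p x * ((x \<bullet> a) * (x \<bullet> b) * (x \<bullet> c)))"
  by (rule int_pbound[OF pbound_mult[OF pbound_mult[OF pbound_inner pbound_inner] pbound_inner]]) measurable

lemma tilt0: "(\<integral>x. p x * exp (x \<bullet> v) \<partial>lborel) = Mg v"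
  using tilt[of "\<lambda>_. 1" v] by (simp add: p_integral)

lemma tilt1: "(\<integral>x. p x * (exp (x \<bullet> v) * (x \<bullet> a)) \<partial>lborel) = Mg v * ((S *v v) \<bullet> a)"
proof -
  let ?m = "S *v v"
  have "(\<integral>x. p x * (exp (x \<bullet> v) * (x \<bullet> a)) \<partial>lborel) = Mg v * (\<integral>y. p y * ((y + ?m) \<bullet> a) \<partial>lborel)"
    by (rule tilt) measurable
  also have "(\<lambda>y. p y * ((y + ?m) \<bullet> a)) = (\<lambda>y. p y * (y \<bullet> a) + (?m \<bullet> a) * p y)"
    by (rule ext) (simp add: inner_add_left algebra_simps)
  also have "(\<integral>y. p y * (y \<bullet> a) + (?m \<bullet> a) * p y \<partial>lborel) = ?m \<bullet> a"
    using int_inner1[of a] p_integrable by (simp add: mom1 p_integral)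
  finally show ?thesis .
qed

lemma tilt2: "(\<integral>x. p x * (exp (x \<bullet> v) * ((x \<bullet> a) * (x \<bullet> b))) \<partial>lborel) =
   Mg v * (((S *v v) \<bullet> a) * ((S *v v) \<bullet> b) + a \<bullet> (S *v b))"
proof -
  let ?m = "S *v v"
  have "(\<integral>x. p x * (exp (x \<bullet> v) * ((x \<bullet> a) * (x \<bullet> b))) \<partial>lborel) = Mg v * (\<integral>y. p y * (((y + ?m) \<bullet> a) * ((y + ?m) \<bullet> b)) \<partial>lborel)"
    by (rule tilt) measurable
  also have "(\<lambda>y. p y * (((y + ?m) \<bullet> a) * ((y + ?m) \<bullet> b))) =
     (\<lambda>y. p y * ((y \<bullet> a) * (y \<bullet> b)) + ((?m \<bullet> b) * (p y * (y \<bullet> a)) + ((?m \<bullet> a) * (p y * (y \<bullet> b)) + ((?m \<bullet> a) * (?m \<bullet> b)) * p y)))"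
    by (rule ext) (simp add: inner_add_left algebra_simps)
  also have "(\<integral>y. p y * ((y \<bullet> a) * (y \<bullet> b)) + ((?m \<bullet> b) * (p y * (y \<bullet> a)) + ((?m \<bullet> a) * (p y * (y \<bullet> b)) + ((?m \<bullet> a) * (?m \<bullet> b)) * p y)) \<partial>lborel)
     = a \<bullet> (S *v b) + ((?m \<bullet> b) * 0 + ((?m \<bullet> a) * 0 + ((?m \<bullet> a) * (?m \<bullet> b)) * 1))"
    using int_inner1[of a] int_inner1[of b] int_inner2[of a b] p_integrable
    by (simp add: mom1 mom2 p_integral)
  finally show ?thesis by simp
qed

lemma tilt3: "(\<integral>x. p x * (exp (x \<bullet> v) * ((x \<bullet> a) * (x \<bullet> b) * (x \<bullet> c))) \<partial>lborel) =
   Mg v * (((S *v v) \<bullet> a) * ((S *v v) \<bullet> b) * ((S *v v) \<bullet> c)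
     + ((S *v v) \<bullet> a) * (b \<bullet> (S *v c)) + ((S *v v) \<bullet> b) * (a \<bullet> (S *v c)) + ((S *v v) \<bullet> c) * (a \<bullet> (S *v b)))"
proof -
  let ?m = "S *v v"
  let ?al = "?m \<bullet> a" and ?be = "?m \<bullet> b" and ?ga = "?m \<bullet> c"
  have "(\<integral>x. p x * (exp (x \<bullet> v) * ((x \<bullet> a) * (x \<bullet> b) * (x \<bullet> c))) \<partial>lborel) =
     Mg v * (\<integral>y. p y * (((y + ?m) \<bullet> a) * ((y + ?m) \<bullet> b) * ((y + ?m) \<bullet> c)) \<partial>lborel)"
    by (rule tilt) measurable
  also have "(\<lambda>y. p y * (((y + ?m) \<bullet> a) * ((y + ?m) \<bullet> b) * ((y + ?m) \<bullet> c))) =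
     (\<lambda>y. p y * ((y \<bullet> a) * (y \<bullet> b) * (y \<bullet> c))
       + (?ga * (p y * ((y \<bullet> a) * (y \<bullet> b)))
       + (?be * (p y * ((y \<bullet> a) * (y \<bullet> c)))
       + (?al * (p y * ((y \<bullet> b) * (y \<bullet> c)))
       + ((?be * ?ga) * (p y * (y \<bullet> a))
       + ((?al * ?ga) * (p y * (y \<bullet> b))
       + ((?al * ?be) * (p y * (y \<bullet> c))
       + (?al * ?be * ?ga) * p y)))))))"
    by (rule ext) (simp add: inner_add_left algebra_simps)
  also have "(\<integral>y. p y * ((y \<bullet> a) * (y \<bullet> b) * (y \<bullet> c))
       + (?ga * (p y * ((y \<bullet> a) * (y \<bullet> b)))
       + (?be * (p y * ((y \<bullet> a) * (y \<bullet> c)))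
       + (?al * (p y * ((y \<bullet> b) * (y \<bullet> c)))
       + ((?be * ?ga) * (p y * (y \<bullet> a))
       + ((?al * ?ga) * (p y * (y \<bullet> b))
       + ((?al * ?be) * (p y * (y \<bullet> c))
       + (?al * ?be * ?ga) * p y)))))) \<partial>lborel) =
     0 + (?ga * (a \<bullet> (S *v b)) + (?be * (a \<bullet> (S *v c)) + (?al * (b \<bullet> (S *v c))
       + ((?be * ?ga) * 0 + ((?al * ?ga) * 0 + ((?al * ?be) * 0 + (?al * ?be * ?ga) * 1))))))"
    using int_inner1[of a] int_inner1[of b] int_inner1[of c] int_inner2[of a b] int_inner2[of a c]
      int_inner2[of b c] int_inner3[of a b c] p_integrable
    by (simp add: mom1 mom2 mom3 p_integral)
  finally show ?thesis by (simp add: algebra_simps)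
qed

end



lemma exp_lip: fixes s t :: real shows "\<bar>exp s - exp t\<bar> \<le> \<bar>s - t\<bar> * exp (max \<bar>s\<bar> \<bar>t\<bar>)"
proof -
  have key: "\<bar>exp s - exp t\<bar> \<le> \<bar>s - t\<bar> * exp (max \<bar>s\<bar> \<bar>t\<bar>)" if "t \<le> s" for s t :: real
  proof -
    have "exp s - exp t = exp t * (exp (s - t) - 1)" by (simp add: exp_diff algebra_simps)
    then have "\<bar>exp s - exp t\<bar> = exp t * \<bar>exp (s - t) - 1\<bar>" by (simp add: abs_mult)
    also have "\<dots> \<le> exp t * (\<bar>s - t\<bar> * exp \<bar>s - t\<bar>)"
      by (intro mult_left_mono abs_exp_sub_one_le) auto
    also have "\<dots> = \<bar>s - t\<bar> * exp s" using that by (simp add: exp_diff)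
    also have "\<dots> \<le> \<bar>s - t\<bar> * exp (max \<bar>s\<bar> \<bar>t\<bar>)"
      by (intro mult_left_mono) auto
    finally show ?thesis .
  qed
  show ?thesis
  proof (cases "t \<le> s")
    case True then show ?thesis by (rule key)
  next
    case False
    then have "\<bar>exp t - exp s\<bar> \<le> \<bar>t - s\<bar> * exp (max \<bar>t\<bar> \<bar>s\<bar>)" by (intro key) auto
    then show ?thesis by (simp add: abs_minus_commute max.commute)
  qed
qed

lemma unif_ext:
  fixes A :: "nat \<Rightarrow> real \<Rightarrow> real" and F :: "real \<Rightarrow> real"
  assumes rat: "\<And>q. q \<in> \<rat> \<Longrightarrow> (\<lambda>L. A L q) \<longlonglongrightarrow> F q"
    and contF: "\<And>c. isCont F c"
    and lip: "\<And>R::nat. \<exists>B. \<forall>L c c'. \<bar>c\<bar> \<le> real R \<longrightarrow> \<bar>c'\<bar> \<le> real R \<longrightarrow> \<bar>A L c - A L c'\<bar> \<le> B * \<bar>c - c'\<bar>"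
  shows "(\<lambda>L. A L c) \<longlonglongrightarrow> F c"
proof (rule LIMSEQ_I)
  fix r :: real assume r: "0 < r"
  define R where "R = nat \<lceil>\<bar>c\<bar>\<rceil> + 1"
  have cR: "\<bar>c\<bar> + 1 \<le> real R" unfolding R_def by linarith
  obtain B0 where B0: "\<And>L c c'. \<bar>c\<bar> \<le> real R \<Longrightarrow> \<bar>c'\<bar> \<le> real R \<Longrightarrow> \<bar>A L c - A L c'\<bar> \<le> B0 * \<bar>c - c'\<bar>"
    using lip[of R] by blast
  define B where "B = \<bar>B0\<bar> + 1"
  have Bpos: "0 < B" unfolding B_def by simp
  have Bl: "\<bar>A L c - A L c'\<bar> \<le> B * \<bar>c - c'\<bar>" if "\<bar>c\<bar> \<le> real R" "\<bar>c'\<bar> \<le> real R" for L c c'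
  proof -
    have "B0 * \<bar>c - c'\<bar> \<le> B * \<bar>c - c'\<bar>" unfolding B_def by (intro mult_right_mono) auto
    then show ?thesis using B0[OF that, of L] by linarith
  qed
  have "\<exists>s>0. \<forall>y. y \<noteq> c \<and> norm (y - c) < s \<longrightarrow> norm (F y - F c) < r / 3"
  proof -
    have "\<forall>r>0. \<exists>s>0. \<forall>x. x \<noteq> c \<and> norm (x - c) < s \<longrightarrow> norm (F x - F c) < r"
      using contF[of c] unfolding isCont_def LIM_eq .
    moreover have "r / 3 > 0" using r by simp
    ultimately show ?thesis by blast
  qed
  then obtain d where d: "0 < d" "\<And>y. y \<noteq> c \<Longrightarrow> \<bar>y - c\<bar> < d \<Longrightarrow> \<bar>F y - F c\<bar> < r / 3"
    by auto
  define e where "e = min (min d 1) (r / (3 * B))"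
  have e: "0 < e" unfolding e_def using d Bpos r by simp
  obtain q where q: "q \<in> \<rat>" "c < q" "q < c + e"
    using Rats_dense_in_real[of c "c + e"] e by auto
  have qc: "\<bar>q - c\<bar> < e" using q by simp
  have qR: "\<bar>q\<bar> \<le> real R" using qc cR unfolding e_def by linarith
  have cR': "\<bar>c\<bar> \<le> real R" using cR by linarith
  have Fq: "\<bar>F q - F c\<bar> < r / 3" using d(2)[of q] qc q(2) unfolding e_def by simp
  obtain N where N: "\<And>n. n \<ge> N \<Longrightarrow> norm (A n q - F q) < r / 3"
    using LIMSEQ_D[OF rat[OF q(1)], of "r/3"] r by auto
  have "\<forall>n\<ge>N. norm (A n c - F c) < r"
  proof (intro allI impI)
    fix n assume n: "n \<ge> N"
    have "\<bar>A n c - A n q\<bar> \<le> B * \<bar>c - q\<bar>" by (rule Bl[OF cR' qR])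
    also have "\<dots> < B * e" using qc Bpos by (simp add: abs_minus_commute)
    also have "\<dots> \<le> B * (r / (3 * B))" unfolding e_def using Bpos by (intro mult_left_mono) auto
    also have "\<dots> = r / 3" using Bpos by simp
    finally have 1: "\<bar>A n c - A n q\<bar> < r / 3" .
    have 2: "\<bar>A n q - F q\<bar> < r / 3" using N[OF n] by simp
    have "\<bar>A n c - F c\<bar> \<le> \<bar>A n c - A n q\<bar> + \<bar>A n q - F q\<bar> + \<bar>F q - F c\<bar>" by linarith
    then show "norm (A n c - F c) < r" using 1 2 Fq by simp
  qed
  then show "\<exists>no. \<forall>n\<ge>no. norm (A n c - F c) < r" by blast
qed



lemma quot_deriv:
  fixes N :: "'a::real_normed_vector \<Rightarrow> 'b::real_normed_vector" and D :: "'a \<Rightarrow> real"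
  assumes "(N has_derivative N') (at v)" "(D has_derivative D') (at v)" "D v \<noteq> 0"
  shows "((\<lambda>v. N v /\<^sub>R D v) has_derivative (\<lambda>h. (1 / D v) *\<^sub>R N' h - (D' h / (D v)^2) *\<^sub>R N v)) (at v)"
  using assms
  by (auto intro!: derivative_eq_intros simp: fun_eq_iff field_simps power2_eq_square scaleR_diff_right)

lemma quot_deriv2:
  fixes N N1 :: "'a::real_normed_vector \<Rightarrow> 'b::real_normed_vector" and D D1 :: "'a \<Rightarrow> real"
  assumes "(N has_derivative N') (at v)" "(D has_derivative D') (at v)"
    "(N1 has_derivative N1') (at v)" "(D1 has_derivative D1') (at v)" "D v \<noteq> 0"
  shows "((\<lambda>v. (1 / D v) *\<^sub>R N1 v - (D1 v / (D v)^2) *\<^sub>R N v) has_derivative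
     (\<lambda>g. (1 / D v) *\<^sub>R N1' g - (D' g / (D v)^2) *\<^sub>R N1 v - (D1' g / (D v)^2) *\<^sub>R N v
        + (2 * D1 v * D' g / (D v)^3) *\<^sub>R N v - (D1 v / (D v)^2) *\<^sub>R N' g)) (at v)"
  using assms
  apply (auto intro!: derivative_eq_intros simp: fun_eq_iff field_simps power2_eq_square power3_eq_cube scaleR_diff_right)
  apply (simp only: scaleR_left_distrib[symmetric])
  apply (rule arg_cong[where f="\<lambda>t. t *\<^sub>R N v"])
  apply (simp add: field_simps)
  done

definition Ek :: "real \<Rightarrow> (nat \<Rightarrow> real^'d) \<Rightarrow> nat \<Rightarrow> real^'d \<Rightarrow> real" where
  "Ek lam x k v = exp (lam * (x 1 \<bullet> v) * (x k \<bullet> v))"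
definition wv :: "real \<Rightarrow> (nat \<Rightarrow> real^'d) \<Rightarrow> real^'d \<Rightarrow> real^'d \<Rightarrow> real^'d" where
  "wv lam x v h = lam *\<^sub>R ((x 1 \<bullet> h) *\<^sub>R v + (x 1 \<bullet> v) *\<^sub>R h)"
definition zv :: "real \<Rightarrow> (nat \<Rightarrow> real^'d) \<Rightarrow> real^'d \<Rightarrow> real^'d \<Rightarrow> real^'d" where
  "zv lam x h g = lam *\<^sub>R ((x 1 \<bullet> h) *\<^sub>R g + (x 1 \<bullet> g) *\<^sub>R h)"
definition NN :: "real \<Rightarrow> (nat \<Rightarrow> real^'d) \<Rightarrow> nat \<Rightarrow> real^'d \<Rightarrow> real^'d" where
  "NN lam x L v = (\<Sum>k\<in>{1..L}. Ek lam x k v *\<^sub>R x k)"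
definition DD :: "real \<Rightarrow> (nat \<Rightarrow> real^'d) \<Rightarrow> nat \<Rightarrow> real^'d \<Rightarrow> real" where
  "DD lam x L v = (\<Sum>k\<in>{1..L}. Ek lam x k v)"
definition NN1 :: "real \<Rightarrow> (nat \<Rightarrow> real^'d) \<Rightarrow> nat \<Rightarrow> real^'d \<Rightarrow> real^'d \<Rightarrow> real^'d" where
  "NN1 lam x L v h = (\<Sum>k\<in>{1..L}. (Ek lam x k v * (x k \<bullet> wv lam x v h)) *\<^sub>R x k)"
definition DD1 :: "real \<Rightarrow> (nat \<Rightarrow> real^'d) \<Rightarrow> nat \<Rightarrow> real^'d \<Rightarrow> real^'d \<Rightarrow> real" where
  "DD1 lam x L v h = (\<Sum>k\<in>{1..L}. Ek lam x k v * (x k \<bullet> wv lam x v h))"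
definition NN2 :: "real \<Rightarrow> (nat \<Rightarrow> real^'d) \<Rightarrow> nat \<Rightarrow> real^'d \<Rightarrow> real^'d \<Rightarrow> real^'d \<Rightarrow> real^'d" where
  "NN2 lam x L v h g = (\<Sum>k\<in>{1..L}. (Ek lam x k v * ((x k \<bullet> wv lam x v g) * (x k \<bullet> wv lam x v h) + x k \<bullet> zv lam x h g)) *\<^sub>R x k)"
definition DD2 :: "real \<Rightarrow> (nat \<Rightarrow> real^'d) \<Rightarrow> nat \<Rightarrow> real^'d \<Rightarrow> real^'d \<Rightarrow> real^'d \<Rightarrow> real" where
  "DD2 lam x L v h g = (\<Sum>k\<in>{1..L}. Ek lam x k v * ((x k \<bullet> wv lam x v g) * (x k \<bullet> wv lam x v h) + x k \<bullet> zv lam x h g))"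

definition dT :: "real \<Rightarrow> (nat \<Rightarrow> real^'d) \<Rightarrow> nat \<Rightarrow> real^'d \<Rightarrow> real^'d \<Rightarrow> real^'d" where
  "dT lam x L v h = (1 / DD lam x L v) *\<^sub>R NN1 lam x L v h - (DD1 lam x L v h / (DD lam x L v)^2) *\<^sub>R NN lam x L v"
definition d2T :: "real \<Rightarrow> (nat \<Rightarrow> real^'d) \<Rightarrow> nat \<Rightarrow> real^'d \<Rightarrow> real^'d \<Rightarrow> real^'d \<Rightarrow> real^'d" where
  "d2T lam x L v h g = (1 / DD lam x L v) *\<^sub>R NN2 lam x L v h g
     - (DD1 lam x L v g / (DD lam x L v)^2) *\<^sub>R NN1 lam x L v h
     - (DD2 lam x L v h g / (DD lam x L v)^2) *\<^sub>R NN lam x L v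
     + (2 * DD1 lam x L v h * DD1 lam x L v g / (DD lam x L v)^3) *\<^sub>R NN lam x L v
     - (DD1 lam x L v h / (DD lam x L v)^2) *\<^sub>R NN1 lam x L v g"

lemma Ek_deriv: "(Ek lam x k has_derivative (\<lambda>g. Ek lam x k v * (x k \<bullet> wv lam x v g))) (at v)"
  unfolding Ek_def[abs_def] wv_def
  by (auto intro!: derivative_eq_intros simp: fun_eq_iff inner_add_right algebra_simps)

lemma lin_deriv: "((\<lambda>v. x k \<bullet> wv lam x v h) has_derivative (\<lambda>g. x k \<bullet> zv lam x h g)) (at v)"
  unfolding wv_def zv_def
  by (auto intro!: derivative_eq_intros simp: fun_eq_iff inner_add_right algebra_simps)

lemma NN_deriv: "(NN lam x L has_derivative NN1 lam x L v) (at v)"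
proof -
  have "((\<lambda>v. \<Sum>k\<in>{1..L}. Ek lam x k v *\<^sub>R x k) has_derivative
      (\<lambda>g. \<Sum>k\<in>{1..L}. (Ek lam x k v * (x k \<bullet> wv lam x v g)) *\<^sub>R x k)) (at v)"
    by (intro has_derivative_sum has_derivative_scaleR_left Ek_deriv)
  then show ?thesis unfolding NN_def[abs_def] NN1_def[abs_def] .
qed

lemma DD_deriv: "(DD lam x L has_derivative DD1 lam x L v) (at v)"
proof -
  have "((\<lambda>v. \<Sum>k\<in>{1..L}. Ek lam x k v) has_derivative
      (\<lambda>g. \<Sum>k\<in>{1..L}. Ek lam x k v * (x k \<bullet> wv lam x v g))) (at v)"
    by (intro has_derivative_sum Ek_deriv)
  then show ?thesis unfolding DD_def[abs_def] DD1_def[abs_def] .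
qed

lemma NN1_deriv: "((\<lambda>v. NN1 lam x L v h) has_derivative NN2 lam x L v h) (at v)"
proof -
  have "((\<lambda>v. \<Sum>k\<in>{1..L}. (Ek lam x k v * (x k \<bullet> wv lam x v h)) *\<^sub>R x k) has_derivative
      (\<lambda>g. \<Sum>k\<in>{1..L}. (Ek lam x k v * (x k \<bullet> zv lam x h g) + Ek lam x k v * (x k \<bullet> wv lam x v g) * (x k \<bullet> wv lam x v h)) *\<^sub>R x k)) (at v)"
    by (intro has_derivative_sum has_derivative_scaleR_left has_derivative_mult Ek_deriv lin_deriv)
  moreover have "(\<lambda>g. \<Sum>k\<in>{1..L}. (Ek lam x k v * (x k \<bullet> zv lam x h g) + Ek lam x k v * (x k \<bullet> wv lam x v g) * (x k \<bullet> wv lam x v h)) *\<^sub>R x k)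
     = NN2 lam x L v h"
    unfolding NN2_def by (intro ext sum.cong refl arg_cong[where f="\<lambda>t. t *\<^sub>R _"]) (simp add: algebra_simps)
  ultimately show ?thesis unfolding NN1_def[abs_def] by simp
qed

lemma DD1_deriv: "((\<lambda>v. DD1 lam x L v h) has_derivative DD2 lam x L v h) (at v)"
proof -
  have "((\<lambda>v. \<Sum>k\<in>{1..L}. Ek lam x k v * (x k \<bullet> wv lam x v h)) has_derivative
      (\<lambda>g. \<Sum>k\<in>{1..L}. Ek lam x k v * (x k \<bullet> zv lam x h g) + Ek lam x k v * (x k \<bullet> wv lam x v g) * (x k \<bullet> wv lam x v h))) (at v)"
    by (intro has_derivative_sum has_derivative_mult Ek_deriv lin_deriv)
  moreover have "(\<lambda>g. \<Sum>k\<in>{1..L}. Ek lam x k v * (x k \<bullet> zv lam x h g) + Ek lam x k v * (x k \<bullet> wv lam x v g) * (x k \<bullet> wv lam x v h))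
     = DD2 lam x L v h"
    unfolding DD2_def by (intro ext sum.cong refl) (simp add: algebra_simps)
  ultimately show ?thesis unfolding DD1_def[abs_def] by simp
qed

lemma DD_pos: "L \<ge> 1 \<Longrightarrow> DD lam x L v > 0"
  unfolding DD_def Ek_def by (intro sum_pos) auto

lemma T_L_eq: "T_L lam x L = (\<lambda>v. NN lam x L v /\<^sub>R DD lam x L v)"
  unfolding T_L_def NN_def DD_def Ek_def by (rule ext) simp

lemma T_deriv: "L \<ge> 1 \<Longrightarrow> (T_L lam x L has_derivative dT lam x L v) (at v)"
  unfolding T_L_eq dT_def[abs_def]
  using DD_pos[of L lam x v] by (intro quot_deriv NN_deriv DD_deriv) auto

lemma dT_deriv: "L \<ge> 1 \<Longrightarrow> ((\<lambda>v. dT lam x L v h) has_derivative d2T lam x L v h) (at v)"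
  unfolding dT_def d2T_def[abs_def]
  using DD_pos[of L lam x v] by (intro quot_deriv2 NN_deriv DD_deriv NN1_deriv DD1_deriv) auto

lemma D1_T_L: "L \<ge> 1 \<Longrightarrow> D1 (T_L lam x L) v h = dT lam x L v h"
  unfolding D1_def using frechet_derivative_at[OF T_deriv[of L lam x v]] by simp

lemma D2_T_L: "L \<ge> 1 \<Longrightarrow> D2 (T_L lam x L) v h g = d2T lam x L v h g"
proof -
  assume L: "L \<ge> 1"
  have "(\<lambda>v. D1 (T_L lam x L) v h) = (\<lambda>v. dT lam x L v h)" by (rule ext) (rule D1_T_L[OF L])
  moreover have eq2: "frechet_derivative (\<lambda>v. dT lam x L v h) (at v) = d2T lam x L v h"
    by (rule frechet_derivative_at[OF dT_deriv[OF L, where lam=lam and x=x and h=h and v=v], symmetric])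
  ultimately show ?thesis unfolding D2_def by simp
qed

lemma T_inf_eq: "T_inf lam S x1 v = (lam * (v \<bullet> x1)) *\<^sub>R (S *v v)"
proof -
  have "(\<chi> i j. v $ i * v $ j) *v x1 = (v \<bullet> x1) *\<^sub>R v"
    by (simp add: vec_eq_iff matrix_vector_mult_def inner_vec_def sum_distrib_left algebra_simps)
  then show ?thesis unfolding T_inf_def
    by (simp add: matrix_vector_mul_assoc[symmetric] matrix_vector_mult_scaleR)
qed

lemma Sv_deriv: "((\<lambda>v. (S::real^'d^'d) *v v) has_derivative (\<lambda>h. S *v h)) (at v)"
  by (rule bounded_linear.has_derivative[OF matrix_vector_mul_bounded_linear has_derivative_ident])

lemma T_inf_deriv: "(T_inf lam S x1 has_derivative
     (\<lambda>h. (lam * (h \<bullet> x1)) *\<^sub>R (S *v v) + (lam * (v \<bullet> x1)) *\<^sub>R (S *v h))) (at v)"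
  unfolding T_inf_eq[abs_def]
  by (auto intro!: derivative_eq_intros Sv_deriv simp: fun_eq_iff algebra_simps)

lemma D1_T_inf: "D1 (T_inf lam S x1) v h = (lam * (h \<bullet> x1)) *\<^sub>R (S *v v) + (lam * (v \<bullet> x1)) *\<^sub>R (S *v h)"
proof -
  have eq: "frechet_derivative (T_inf lam S x1) (at v) = (\<lambda>h. (lam * (h \<bullet> x1)) *\<^sub>R (S *v v) + (lam * (v \<bullet> x1)) *\<^sub>R (S *v h))"
    by (rule frechet_derivative_at[OF T_inf_deriv, symmetric])
  show ?thesis unfolding D1_def eq by simp
qed

lemma D2_T_inf: "D2 (T_inf lam S x1) v h g = (lam * (h \<bullet> x1)) *\<^sub>R (S *v g) + (lam * (g \<bullet> x1)) *\<^sub>R (S *v h)"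
proof -
  have e1: "(\<lambda>v. D1 (T_inf lam S x1) v h) = (\<lambda>v. (lam * (h \<bullet> x1)) *\<^sub>R (S *v v) + (lam * (v \<bullet> x1)) *\<^sub>R (S *v h))"
    by (rule ext) (rule D1_T_inf)
  have d1: "((\<lambda>v. (lam * (h \<bullet> x1)) *\<^sub>R (S *v v) + (lam * (v \<bullet> x1)) *\<^sub>R (S *v h)) has_derivative
      (\<lambda>g. (lam * (h \<bullet> x1)) *\<^sub>R (S *v g) + (lam * (g \<bullet> x1)) *\<^sub>R (S *v h))) (at v)"
    by (auto intro!: derivative_eq_intros Sv_deriv simp: fun_eq_iff algebra_simps)
  have eq: "frechet_derivative (\<lambda>v. D1 (T_inf lam S x1) v h) (at v) =
      (\<lambda>g. (lam * (h \<bullet> x1)) *\<^sub>R (S *v g) + (lam * (g \<bullet> x1)) *\<^sub>R (S *v h))"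
    unfolding e1 by (rule frechet_derivative_at[OF d1, symmetric])
  show ?thesis unfolding D2_def eq by simp
qed



definition cm :: "nat \<times> 'd \<times> 'd \<times> 'd \<Rightarrow> real^'d \<Rightarrow> real" where
  "cm t y = (case t of (n, i, j, l) \<Rightarrow>
     if n = 0 then 1 else if n = 1 then y \<bullet> axis i 1
     else if n = 2 then (y \<bullet> axis i 1) * (y \<bullet> axis j 1)
     else (y \<bullet> axis i 1) * (y \<bullet> axis j 1) * (y \<bullet> axis l 1))"

definition avg :: "(nat \<Rightarrow> real^'d) \<Rightarrow> real^'d \<Rightarrow> nat \<Rightarrow> real \<Rightarrow> (real^'d \<Rightarrow> real) \<Rightarrow> real" where
  "avg xs mu L c f = (\<Sum>k\<in>{1..L}. exp (c * (xs k \<bullet> mu)) * f (xs k)) / real L"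

definition GR :: "real^'d \<Rightarrow> nat \<Rightarrow> nat \<times> 'd \<times> 'd \<times> 'd \<Rightarrow> real^'d \<Rightarrow> real" where
  "GR mu R t y = \<bar>cm t y\<bar> * (\<bar>y \<bullet> mu\<bar> * exp (real R * \<bar>y \<bullet> mu\<bar>))"

lemma cm_cases:
  fixes t :: "nat \<times> 'd::finite \<times> 'd \<times> 'd"
  obtains (c0) i j l where "t = (0, i, j, l)" "cm t = (\<lambda>y. 1)"
  | (c1) i j l where "t = (1, i, j, l)" "cm t = (\<lambda>y. y \<bullet> axis i 1)"
  | (c2) i j l where "t = (2, i, j, l)" "cm t = (\<lambda>y. (y \<bullet> axis i 1) * (y \<bullet> axis j 1))"
  | (c3) n i j l where "t = (n, i, j, l)" "n \<ge> 3" "cm t = (\<lambda>y. (y \<bullet> axis i 1) * (y \<bullet> axis j 1) * (y \<bullet> axis l 1))"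
proof -
  obtain n i j l where t: "t = (n, i, j, l)" by (cases t) auto
  consider "n = 0" | "n = 1" | "n = 2" | "n \<ge> 3" by linarith
  then show ?thesis
  proof cases
    case 1 then show ?thesis using c0[of i j l] t by (auto simp: cm_def fun_eq_iff)
  next
    case 2 then show ?thesis using c1[of i j l] t by (auto simp: cm_def fun_eq_iff)
  next
    case 3 then show ?thesis using c2[of i j l] t by (auto simp: cm_def fun_eq_iff)
  next
    case 4 then show ?thesis using c3[of n i j l] t by (auto simp: cm_def fun_eq_iff)
  qed
qed

lemma cm_meas[measurable]: "cm t \<in> borel_measurable borel"
  by (cases t rule: cm_cases) simp_all

lemma pbound_cm: "pbound (cm t)"
  by (cases t rule: cm_cases) (simp_all add: pbound_const pbound_inner pbound_mult)

lemma GR_meas[measurable]: "GR mu R t \<in> borel_measurable borel"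
  unfolding GR_def by measurable

lemma pbound_GR: "pbound (GR mu R t)"
proof -
  have "GR mu R t = (\<lambda>y. \<bar>cm t y\<bar> * (\<bar>y \<bullet> mu\<bar> * exp \<bar>y \<bullet> (real R *\<^sub>R mu)\<bar>))"
    unfolding GR_def by (simp add: abs_mult)
  then show ?thesis
    by (simp only:) (intro pbound_mult pbound_abs pbound_cm pbound_inner pbound_exp_abs_inner)
qed

lemma avg_lip:
  assumes "\<bar>c\<bar> \<le> R" "\<bar>c'\<bar> \<le> R"
  shows "\<bar>avg xs mu L c f - avg xs mu L c' f\<bar> \<le>
     \<bar>c - c'\<bar> * ((\<Sum>k\<in>{1..L}. \<bar>f (xs k)\<bar> * (\<bar>xs k \<bullet> mu\<bar> * exp (R * \<bar>xs k \<bullet> mu\<bar>))) / real L)"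
proof -
  have one: "\<bar>(exp (c * a) - exp (c' * a)) * b\<bar> \<le> \<bar>c - c'\<bar> * (\<bar>b\<bar> * (\<bar>a\<bar> * exp (R * \<bar>a\<bar>)))" for a b :: real
  proof -
    have "\<bar>exp (c * a) - exp (c' * a)\<bar> \<le> \<bar>c * a - c' * a\<bar> * exp (max \<bar>c * a\<bar> \<bar>c' * a\<bar>)"
      by (rule exp_lip)
    also have "\<dots> \<le> (\<bar>c - c'\<bar> * \<bar>a\<bar>) * exp (R * \<bar>a\<bar>)"
    proof (intro mult_mono)
      show "\<bar>c * a - c' * a\<bar> \<le> \<bar>c - c'\<bar> * \<bar>a\<bar>" by (simp add: abs_mult[symmetric] left_diff_distrib)
      have "\<bar>c * a\<bar> \<le> R * \<bar>a\<bar>" "\<bar>c' * a\<bar> \<le> R * \<bar>a\<bar>"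
        using assms by (simp_all add: abs_mult mult_right_mono)
      then show "exp (max \<bar>c * a\<bar> \<bar>c' * a\<bar>) \<le> exp (R * \<bar>a\<bar>)" by simp
    qed auto
    finally have "\<bar>exp (c * a) - exp (c' * a)\<bar> \<le> \<bar>c - c'\<bar> * \<bar>a\<bar> * exp (R * \<bar>a\<bar>)" .
    then have "\<bar>exp (c * a) - exp (c' * a)\<bar> * \<bar>b\<bar> \<le> (\<bar>c - c'\<bar> * \<bar>a\<bar> * exp (R * \<bar>a\<bar>)) * \<bar>b\<bar>"
      by (intro mult_right_mono) auto
    moreover have "\<bar>(exp (c * a) - exp (c' * a)) * b\<bar> = \<bar>exp (c * a) - exp (c' * a)\<bar> * \<bar>b\<bar>" by (rule abs_mult)
    moreover have "(\<bar>c - c'\<bar> * \<bar>a\<bar> * exp (R * \<bar>a\<bar>)) * \<bar>b\<bar> = \<bar>c - c'\<bar> * (\<bar>b\<bar> * (\<bar>a\<bar> * exp (R * \<bar>a\<bar>)))"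
      by (simp add: algebra_simps)
    ultimately show ?thesis by linarith
  qed
  have "\<bar>avg xs mu L c f - avg xs mu L c' f\<bar> =
      \<bar>\<Sum>k\<in>{1..L}. (exp (c * (xs k \<bullet> mu)) - exp (c' * (xs k \<bullet> mu))) * f (xs k)\<bar> / real L"
    unfolding avg_def by (simp add: diff_divide_distrib[symmetric] sum_subtractf[symmetric] left_diff_distrib)
  also have "\<dots> \<le> (\<Sum>k\<in>{1..L}. \<bar>c - c'\<bar> * (\<bar>f (xs k)\<bar> * (\<bar>xs k \<bullet> mu\<bar> * exp (R * \<bar>xs k \<bullet> mu\<bar>)))) / real L"
    by (intro divide_right_mono order_trans[OF sum_abs] sum_mono one) auto
  also have "\<dots> = \<bar>c - c'\<bar> * ((\<Sum>k\<in>{1..L}. \<bar>f (xs k)\<bar> * (\<bar>xs k \<bullet> mu\<bar> * exp (R * \<bar>xs k \<bullet> mu\<bar>))) / real L)"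
    by (simp add: sum_distrib_left)
  finally show ?thesis .
qed

context gauss
begin

definition Lim :: "real^'d \<Rightarrow> real \<Rightarrow> (real^'d \<Rightarrow> real) \<Rightarrow> real" where
  "Lim mu c f = (\<integral>x. p x * (exp (c * (x \<bullet> mu)) * f x) \<partial>lborel)"

lemma Lim_eq_tilt: "Lim mu c f = (\<integral>x. p x * (exp (x \<bullet> (c *\<^sub>R mu)) * f x) \<partial>lborel)"
  by (simp add: Lim_def)

lemma Lim0: "Lim mu c (\<lambda>y. 1) = Mg (c *\<^sub>R mu)"
  unfolding Lim_eq_tilt using tilt0[of "c *\<^sub>R mu"] by simp
lemma Lim1: "Lim mu c (\<lambda>y. y \<bullet> a) = Mg (c *\<^sub>R mu) * ((S *v (c *\<^sub>R mu)) \<bullet> a)"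
  unfolding Lim_eq_tilt by (rule tilt1)
lemma Lim2: "Lim mu c (\<lambda>y. (y \<bullet> a) * (y \<bullet> b)) =
   Mg (c *\<^sub>R mu) * (((S *v (c *\<^sub>R mu)) \<bullet> a) * ((S *v (c *\<^sub>R mu)) \<bullet> b) + a \<bullet> (S *v b))"
  unfolding Lim_eq_tilt by (rule tilt2)
lemma Lim3: "Lim mu c (\<lambda>y. (y \<bullet> a) * (y \<bullet> b) * (y \<bullet> d)) =
   Mg (c *\<^sub>R mu) * (((S *v (c *\<^sub>R mu)) \<bullet> a) * ((S *v (c *\<^sub>R mu)) \<bullet> b) * ((S *v (c *\<^sub>R mu)) \<bullet> d)
     + ((S *v (c *\<^sub>R mu)) \<bullet> a) * (b \<bullet> (S *v d)) + ((S *v (c *\<^sub>R mu)) \<bullet> b) * (a \<bullet> (S *v d))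
     + ((S *v (c *\<^sub>R mu)) \<bullet> d) * (a \<bullet> (S *v b)))"
  unfolding Lim_eq_tilt by (rule tilt3)

lemma Mg_scale: "Mg (c *\<^sub>R mu) = exp (c * c * (mu \<bullet> (S *v mu)) / 2)"
  by (simp add: Mg_def matrix_vector_mult_scaleR algebra_simps)
lemma mS_scale: "(S *v (c *\<^sub>R mu)) \<bullet> a = c * ((S *v mu) \<bullet> a)"
  by (simp add: matrix_vector_mult_scaleR)

lemma Lim_cont: "isCont (\<lambda>c. Lim mu c (cm t)) c0"
proof (cases t rule: cm_cases)
  case (c0 i j l) then show ?thesis by (simp add: Lim0 Mg_scale)
next
  case (c1 i j l) then show ?thesis by (simp add: Lim1 Mg_scale mS_scale)
next
  case (c2 i j l) then show ?thesis by (simp add: Lim2 Mg_scale mS_scale)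
next
  case (c3 n i j l) then show ?thesis by (simp add: Lim3 Mg_scale mS_scale)
qed

lemma good_ext:
  fixes xs :: "nat \<Rightarrow> real^'d"
  assumes rat: "\<forall>q::rat. (\<lambda>L. avg xs mu L (real_of_rat q) (cm t)) \<longlonglongrightarrow> Lim mu (real_of_rat q) (cm t)"
    and conv: "\<forall>R::nat. convergent (\<lambda>L. (\<Sum>k\<in>{1..L}. GR mu R t (xs k)) / real L)"
  shows "(\<lambda>L. avg xs mu L c (cm t)) \<longlonglongrightarrow> Lim mu c (cm t)"
proof (rule unif_ext[where A="\<lambda>L c. avg xs mu L c (cm t)" and F="\<lambda>c. Lim mu c (cm t)"])
  fix q :: real assume "q \<in> \<rat>"
  then obtain r where "q = real_of_rat r" by (auto elim: Rats_cases)
  then show "(\<lambda>L. avg xs mu L q (cm t)) \<longlonglongrightarrow> Lim mu q (cm t)" using rat by simp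
next
  fix c show "isCont (\<lambda>c. Lim mu c (cm t)) c" by (rule Lim_cont)
next
  fix R :: nat
  have "Bseq (\<lambda>L. (\<Sum>k\<in>{1..L}. GR mu R t (xs k)) / real L)"
    using conv by (simp add: convergent_imp_Bseq)
  then obtain K where K: "\<And>L. norm ((\<Sum>k\<in>{1..L}. GR mu R t (xs k)) / real L) \<le> K"
    by (auto simp: Bseq_def)
  have "\<forall>L c c'. \<bar>c\<bar> \<le> real R \<longrightarrow> \<bar>c'\<bar> \<le> real R \<longrightarrow>
      \<bar>avg xs mu L c (cm t) - avg xs mu L c' (cm t)\<bar> \<le> K * \<bar>c - c'\<bar>"
  proof (intro allI impI)
    fix L c c' assume "\<bar>c\<bar> \<le> real R" "\<bar>c'\<bar> \<le> real R"
    then have "\<bar>avg xs mu L c (cm t) - avg xs mu L c' (cm t)\<bar> \<le> \<bar>c - c'\<bar> * ((\<Sum>k\<in>{1..L}. GR mu R t (xs k)) / real L)"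
      using avg_lip[of c "real R" c' xs mu L "cm t"] by (simp add: GR_def)
    also have "\<dots> \<le> \<bar>c - c'\<bar> * K"
    proof (intro mult_left_mono)
      have "(\<Sum>k\<in>{1..L}. GR mu R t (xs k)) / real L \<le> norm ((\<Sum>k\<in>{1..L}. GR mu R t (xs k)) / real L)"
        by (simp only: real_norm_def abs_ge_self)
      then show "(\<Sum>k\<in>{1..L}. GR mu R t (xs k)) / real L \<le> K" using K[of L] by linarith
    qed simp
    finally show "\<bar>avg xs mu L c (cm t) - avg xs mu L c' (cm t)\<bar> \<le> K * \<bar>c - c'\<bar>" by (simp add: mult.commute)
  qed
  then show "\<exists>B. \<forall>L c c'. \<bar>c\<bar> \<le> real R \<longrightarrow> \<bar>c'\<bar> \<le> real R \<longrightarrow>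
      \<bar>avg xs mu L c (cm t) - avg xs mu L c' (cm t)\<bar> \<le> B * \<bar>c - c'\<bar>" by blast
qed

end

lemma avg_add: "avg xs mu L c (\<lambda>y. f y + g y) = avg xs mu L c f + avg xs mu L c g"
  unfolding avg_def by (simp add: distrib_left sum.distrib add_divide_distrib)

lemma avg_cmult: "avg xs mu L c (\<lambda>y. r * f y) = r * avg xs mu L c f"
  unfolding avg_def by (simp add: sum_distrib_left algebra_simps)

lemma avg_sum: "avg xs mu L c (\<lambda>y. \<Sum>i\<in>I. f i y) = (\<Sum>i\<in>I. avg xs mu L c (f i))"
  unfolding avg_def by (simp add: sum_distrib_left sum_divide_distrib sum.swap[of _ I])

lemma sum_avg: "L \<ge> 1 \<Longrightarrow> (\<Sum>k\<in>{1..L}. exp (c * (xs k \<bullet> mu)) * f (xs k)) = real L * avg xs mu L c f"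
  unfolding avg_def by simp

lemma inner_axis_sum: "(y::real^'d) \<bullet> a = (\<Sum>i\<in>UNIV. a $ i * (y \<bullet> axis i 1))"
proof -
  have "y \<bullet> a = (\<Sum>i\<in>UNIV. a $ i * y $ i)" by (simp add: inner_vec_def mult.commute)
  then show ?thesis by (simp only: cart_eq_inner_axis[of y])
qed

lemma sum_pair: "(\<Sum>ij\<in>(UNIV::('a::finite\<times>'b::finite) set). F (fst ij) (snd ij)) = (\<Sum>i\<in>UNIV. \<Sum>j\<in>UNIV. (F i j::real))"
  by (simp add: sum.cartesian_product UNIV_Times_UNIV[symmetric] case_prod_beta' del: UNIV_Times_UNIV)

lemma sum_triple: "(\<Sum>ijl\<in>(UNIV::('a::finite\<times>'b::finite\<times>'c::finite) set). F (fst ijl) (fst (snd ijl)) (snd (snd ijl)))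
   = (\<Sum>i\<in>UNIV. \<Sum>j\<in>UNIV. \<Sum>l\<in>UNIV. (F i j l::real))"
  using sum_pair[of "\<lambda>i jl. F i (fst jl) (snd jl)"] sum_pair[of "F i" for i] by simp

context gauss
begin

lemma Lim_sum:
  assumes "finite I" "\<And>i. i \<in> I \<Longrightarrow> pbound (f i)" "\<And>i. i \<in> I \<Longrightarrow> f i \<in> borel_measurable borel"
  shows "Lim mu c (\<lambda>y. \<Sum>i\<in>I. r i * f i y) = (\<Sum>i\<in>I. r i * Lim mu c (f i))"
proof -
  have int: "integrable lborel (\<lambda>x. p x * (exp (c * (x \<bullet> mu)) * f i x))" if "i \<in> I" for i
  proof -
    have "pbound (\<lambda>x. exp (x \<bullet> (c *\<^sub>R mu)) * f i x)" using assms(2)[OF that] by (intro pbound_mult pbound_exp_inner)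
    moreover have "(\<lambda>x. exp (x \<bullet> (c *\<^sub>R mu)) * f i x) \<in> borel_measurable borel" using assms(3)[OF that] by measurable
    ultimately show ?thesis using int_pbound by simp
  qed
  have "Lim mu c (\<lambda>y. \<Sum>i\<in>I. r i * f i y) = (\<integral>x. (\<Sum>i\<in>I. r i * (p x * (exp (c * (x \<bullet> mu)) * f i x))) \<partial>lborel)"
    unfolding Lim_def by (intro Bochner_Integration.integral_cong refl) (simp add: sum_distrib_left algebra_simps)
  also have "\<dots> = (\<Sum>i\<in>I. r i * Lim mu c (f i))"
    unfolding Lim_def using int by (subst Bochner_Integration.integral_sum) auto
  finally show ?thesis .
qed

lemma lin_lim:
  assumes "finite I" "\<And>i. i \<in> I \<Longrightarrow> pbound (f i)" "\<And>i. i \<in> I \<Longrightarrow> f i \<in> borel_measurable borel"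
    and "\<And>i. i \<in> I \<Longrightarrow> (\<lambda>L. avg xs mu L c (f i)) \<longlonglongrightarrow> Lim mu c (f i)"
  shows "(\<lambda>L. avg xs mu L c (\<lambda>y. \<Sum>i\<in>I. r i * f i y)) \<longlonglongrightarrow> Lim mu c (\<lambda>y. \<Sum>i\<in>I. r i * f i y)"
proof -
  have e: "Lim mu c (\<lambda>y. \<Sum>i\<in>I. r i * f i y) = (\<Sum>i\<in>I. r i * Lim mu c (f i))"
    by (rule Lim_sum[OF assms(1-3)])
  show ?thesis
    unfolding e avg_sum avg_cmult using assms(4)
    by (intro tendsto_sum tendsto_mult tendsto_const) auto
qed

lemma good_inner:
  fixes xs :: "nat \<Rightarrow> real^'d"
  assumes H: "\<And>t. t \<in> {..3::nat} \<times> UNIV \<Longrightarrow> (\<lambda>L. avg xs mu L c (cm t)) \<longlonglongrightarrow> Lim mu c (cm t)"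
  shows good0: "(\<lambda>L. avg xs mu L c (\<lambda>y. 1)) \<longlonglongrightarrow> Lim mu c (\<lambda>y. 1)"
    and good1: "(\<lambda>L. avg xs mu L c (\<lambda>y. y \<bullet> a)) \<longlonglongrightarrow> Lim mu c (\<lambda>y. y \<bullet> a)"
    and good2: "(\<lambda>L. avg xs mu L c (\<lambda>y. (y \<bullet> a) * (y \<bullet> b))) \<longlonglongrightarrow> Lim mu c (\<lambda>y. (y \<bullet> a) * (y \<bullet> b))"
    and good3: "(\<lambda>L. avg xs mu L c (\<lambda>y. (y \<bullet> a) * (y \<bullet> b) * (y \<bullet> d))) \<longlonglongrightarrow> Lim mu c (\<lambda>y. (y \<bullet> a) * (y \<bullet> b) * (y \<bullet> d))"
proof -
  obtain i0 :: 'd where True by simp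
  have "cm (0, i0, i0, i0) = (\<lambda>y. 1)" by (simp add: cm_def fun_eq_iff)
  then show "(\<lambda>L. avg xs mu L c (\<lambda>y. 1)) \<longlonglongrightarrow> Lim mu c (\<lambda>y. 1)"
    using H[of "(0, i0, i0, i0)"] by simp
  have e1: "(\<lambda>y. y \<bullet> a) = (\<lambda>y. \<Sum>i\<in>UNIV. a $ i * cm (1, i, i, i) y)"
    by (simp add: cm_def fun_eq_iff inner_axis_sum[of _ a])
  show "(\<lambda>L. avg xs mu L c (\<lambda>y. y \<bullet> a)) \<longlonglongrightarrow> Lim mu c (\<lambda>y. y \<bullet> a)"
    unfolding e1 by (rule lin_lim) (auto intro: pbound_cm H)
  have pb1: "pbound (\<lambda>y. y \<bullet> u)" for u :: "real^'d" by (rule pbound_inner)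
  have P2e: "(\<lambda>L. avg xs mu L c (\<lambda>y. (y \<bullet> axis i 1) * (y \<bullet> axis j 1))) \<longlonglongrightarrow> Lim mu c (\<lambda>y. (y \<bullet> axis i 1) * (y \<bullet> axis j 1))" for i j
  proof -
    have "cm (2, i, j, j) = (\<lambda>y. (y \<bullet> axis i 1) * (y \<bullet> axis j 1))" by (simp add: cm_def fun_eq_iff)
    then show ?thesis using H[of "(2, i, j, j)"] by simp
  qed
  have P2a: "(\<lambda>L. avg xs mu L c (\<lambda>y. (y \<bullet> axis i 1) * (y \<bullet> b))) \<longlonglongrightarrow> Lim mu c (\<lambda>y. (y \<bullet> axis i 1) * (y \<bullet> b))" for i b
  proof -
    have "(\<lambda>y. (y \<bullet> axis i 1) * (y \<bullet> b)) = (\<lambda>y. \<Sum>j\<in>UNIV. b $ j * ((y \<bullet> axis i 1) * (y \<bullet> axis j 1)))"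
      by (simp add: inner_axis_sum[of _ b] sum_distrib_left algebra_simps)
    then show ?thesis by (simp only:) (rule lin_lim; auto intro: P2e pbound_mult pbound_inner)
  qed
  show "(\<lambda>L. avg xs mu L c (\<lambda>y. (y \<bullet> a) * (y \<bullet> b))) \<longlonglongrightarrow> Lim mu c (\<lambda>y. (y \<bullet> a) * (y \<bullet> b))"
  proof -
    have "(\<lambda>y. (y \<bullet> a) * (y \<bullet> b)) = (\<lambda>y. \<Sum>i\<in>UNIV. a $ i * ((y \<bullet> axis i 1) * (y \<bullet> b)))"
      by (simp add: inner_axis_sum[of _ a] sum_distrib_left sum_distrib_right algebra_simps)
    then show ?thesis by (simp only:) (rule lin_lim; auto intro: P2a pbound_mult pbound_inner)
  qed
  have P3e: "(\<lambda>L. avg xs mu L c (\<lambda>y. (y \<bullet> axis i 1) * (y \<bullet> axis j 1) * (y \<bullet> axis l 1))) \<longlonglongrightarrow> Lim mu c (\<lambda>y. (y \<bullet> axis i 1) * (y \<bullet> axis j 1) * (y \<bullet> axis l 1))" for i j l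
  proof -
    have "cm (3, i, j, l) = (\<lambda>y. (y \<bullet> axis i 1) * (y \<bullet> axis j 1) * (y \<bullet> axis l 1))" by (simp add: cm_def fun_eq_iff)
    then show ?thesis using H[of "(3, i, j, l)"] by simp
  qed
  have P3b: "(\<lambda>L. avg xs mu L c (\<lambda>y. (y \<bullet> axis i 1) * (y \<bullet> axis j 1) * (y \<bullet> d))) \<longlonglongrightarrow> Lim mu c (\<lambda>y. (y \<bullet> axis i 1) * (y \<bullet> axis j 1) * (y \<bullet> d))" for i j d
  proof -
    have "(\<lambda>y. (y \<bullet> axis i 1) * (y \<bullet> axis j 1) * (y \<bullet> d)) = (\<lambda>y. \<Sum>l\<in>UNIV. d $ l * ((y \<bullet> axis i 1) * (y \<bullet> axis j 1) * (y \<bullet> axis l 1)))"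
      by (simp add: inner_axis_sum[of _ d] sum_distrib_left algebra_simps)
    then show ?thesis by (simp only:) (rule lin_lim; auto intro: P3e pbound_mult[OF pbound_mult[OF pbound_inner pbound_inner] pbound_inner])
  qed
  have P3a: "(\<lambda>L. avg xs mu L c (\<lambda>y. (y \<bullet> axis i 1) * (y \<bullet> b) * (y \<bullet> d))) \<longlonglongrightarrow> Lim mu c (\<lambda>y. (y \<bullet> axis i 1) * (y \<bullet> b) * (y \<bullet> d))" for i b d
  proof -
    have "(\<lambda>y. (y \<bullet> axis i 1) * (y \<bullet> b) * (y \<bullet> d)) = (\<lambda>y. \<Sum>j\<in>UNIV. b $ j * ((y \<bullet> axis i 1) * (y \<bullet> axis j 1) * (y \<bullet> d)))"
      by (simp add: inner_axis_sum[of _ b] sum_distrib_left sum_distrib_right algebra_simps)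
    then show ?thesis by (simp only:) (rule lin_lim; auto intro: P3b pbound_mult[OF pbound_mult[OF pbound_inner pbound_inner] pbound_inner])
  qed
  show "(\<lambda>L. avg xs mu L c (\<lambda>y. (y \<bullet> a) * (y \<bullet> b) * (y \<bullet> d))) \<longlonglongrightarrow> Lim mu c (\<lambda>y. (y \<bullet> a) * (y \<bullet> b) * (y \<bullet> d))"
  proof -
    have "(\<lambda>y. (y \<bullet> a) * (y \<bullet> b) * (y \<bullet> d)) = (\<lambda>y. \<Sum>i\<in>UNIV. a $ i * ((y \<bullet> axis i 1) * (y \<bullet> b) * (y \<bullet> d)))"
      by (simp add: inner_axis_sum[of _ a] sum_distrib_left sum_distrib_right algebra_simps)
    then show ?thesis by (simp only:) (rule lin_lim; auto intro: P3a pbound_mult[OF pbound_mult[OF pbound_inner pbound_inner] pbound_inner])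
  qed
qed

end

locale iid = gauss S + prob_space M for S :: "real^'d^'d" and M :: "'w measure" +
  fixes X :: "nat \<Rightarrow> 'w \<Rightarrow> real^'d"
  assumes ind: "indep_vars (\<lambda>_. borel) X {1..}"
    and dis: "\<And>k. k \<ge> 1 \<Longrightarrow> distributed M lborel (X k) (\<lambda>x. ennreal (mvn_density S x))"
begin

lemma Xm[measurable]: "k \<ge> 1 \<Longrightarrow> X k \<in> borel_measurable M"
  using ind by (auto simp: indep_vars_def)

lemma EX_eq:
  assumes [measurable]: "g \<in> borel_measurable borel" and k: "k \<ge> 1"
  shows "expectation (\<lambda>\<omega>. g (X k \<omega>)) = (\<integral>x. p x * g x \<partial>lborel)"
  using distributed_integral[OF dis[OF k], of g] p_nonneg by simp

lemma EX_int:
  assumes [measurable]: "g \<in> borel_measurable borel" and k: "k \<ge> 1"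
    and i: "integrable lborel (\<lambda>x. p x * g x)"
  shows "integrable M (\<lambda>\<omega>. g (X k \<omega>))"
  using distributed_integrable[OF dis[OF k], of g] p_nonneg i by simp

lemma slln_pb:
  assumes pb: "pbound \<psi>" and [measurable]: "\<psi> \<in> borel_measurable borel"
  shows "AE \<omega> in M. (\<lambda>L. (\<Sum>k\<in>{1..L}. \<psi> (X k \<omega>)) / real L) \<longlonglongrightarrow> (\<integral>x. p x * \<psi> x \<partial>lborel)"
proof -
  define m where "m = (\<integral>x. p x * \<psi> x \<partial>lborel)"
  define Z where "Z k \<omega> = \<psi> (X k \<omega>) - m" for k \<omega>
  have indZ: "indep_vars (\<lambda>_. borel) Z {1..}"
    unfolding Z_def by (rule indep_vars_compose2[OF ind]) measurable
  have pb2: "pbound (\<lambda>x. (\<psi> x - m) ^ 2)" by (intro pbound_power pbound_diff pb pbound_const)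
  have pb4: "pbound (\<lambda>x. (\<psi> x - m) ^ 4)" by (intro pbound_power pbound_diff pb pbound_const)
  define B where "B = max (\<integral>x. p x * (\<psi> x - m) ^ 2 \<partial>lborel) (\<integral>x. p x * (\<psi> x - m) ^ 4 \<partial>lborel)"
  have "AE \<omega> in M. (\<lambda>n. (\<Sum>k\<in>{1..n}. Z k \<omega>) / real n) \<longlonglongrightarrow> 0"
  proof (rule slln4[OF indZ])
    fix k :: nat assume k: "k \<ge> 1"
    show "integrable M (\<lambda>\<omega>. Z k \<omega> ^ 4)" unfolding Z_def
      using EX_int[OF _ k int_pbound[OF pb4]] by simp
    have ipsi: "integrable M (\<lambda>\<omega>. \<psi> (X k \<omega>))"
      using EX_int[OF _ k int_pbound[OF pb]] by simp
    show "expectation (Z k) = 0" unfolding Z_def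
      using ipsi EX_eq[of \<psi> k] k unfolding m_def by (simp add: prob_space)
    show "expectation (\<lambda>\<omega>. Z k \<omega> ^ 2) \<le> B" unfolding Z_def B_def
      using EX_eq[of "\<lambda>x. (\<psi> x - m) ^ 2" k] k by simp
    show "expectation (\<lambda>\<omega>. Z k \<omega> ^ 4) \<le> B" unfolding Z_def B_def
      using EX_eq[of "\<lambda>x. (\<psi> x - m) ^ 4" k] k by simp
  qed
  then show ?thesis
  proof (rule AE_mp, intro AE_I2 impI)
    fix \<omega> assume lim: "(\<lambda>n. (\<Sum>k\<in>{1..n}. Z k \<omega>) / real n) \<longlonglongrightarrow> 0"
    have "\<forall>\<^sub>F L in sequentially. (\<Sum>k\<in>{1..L}. Z k \<omega>) / real L + m = (\<Sum>k\<in>{1..L}. \<psi> (X k \<omega>)) / real L"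
      using eventually_ge_at_top[of 1]
    proof (rule eventually_mono)
      fix L :: nat assume "L \<ge> 1"
      then show "(\<Sum>k\<in>{1..L}. Z k \<omega>) / real L + m = (\<Sum>k\<in>{1..L}. \<psi> (X k \<omega>)) / real L"
        unfolding Z_def by (simp add: sum_subtractf field_simps)
    qed
    moreover have "(\<lambda>L. (\<Sum>k\<in>{1..L}. Z k \<omega>) / real L + m) \<longlonglongrightarrow> 0 + m"
      by (intro tendsto_intros lim)
    ultimately show "(\<lambda>L. (\<Sum>k\<in>{1..L}. \<psi> (X k \<omega>)) / real L) \<longlonglongrightarrow> (\<integral>x. p x * \<psi> x \<partial>lborel)"
      unfolding m_def[symmetric] using tendsto_cong by fastforce
  qed
qed

lemma AE_rat: "AE \<omega> in M. \<forall>t\<in>({..3::nat} \<times> UNIV). \<forall>q::rat.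
    (\<lambda>L. avg (\<lambda>k. X k \<omega>) mu L (real_of_rat q) (cm t)) \<longlonglongrightarrow> Lim mu (real_of_rat q) (cm t)"
proof (rule AE_finite_allI)
  show "finite ({..3::nat} \<times> (UNIV :: ('d \<times> 'd \<times> 'd) set))" by simp
  fix t :: "nat \<times> 'd \<times> 'd \<times> 'd"
  show "AE \<omega> in M. \<forall>q::rat. (\<lambda>L. avg (\<lambda>k. X k \<omega>) mu L (real_of_rat q) (cm t)) \<longlonglongrightarrow> Lim mu (real_of_rat q) (cm t)"
  proof (subst AE_all_countable, intro allI)
    fix q :: rat
    let ?psi = "\<lambda>y. exp (real_of_rat q * (y \<bullet> mu)) * cm t y"
    have pb: "pbound ?psi"
    proof -
      have "?psi = (\<lambda>y. exp (y \<bullet> (real_of_rat q *\<^sub>R mu)) * cm t y)" by simp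
      then show ?thesis by (simp only:) (intro pbound_mult pbound_exp_inner pbound_cm)
    qed
    have "AE \<omega> in M. (\<lambda>L. (\<Sum>k\<in>{1..L}. ?psi (X k \<omega>)) / real L) \<longlonglongrightarrow> (\<integral>x. p x * ?psi x \<partial>lborel)"
      by (rule slln_pb[OF pb]) measurable
    then show "AE \<omega> in M. (\<lambda>L. avg (\<lambda>k. X k \<omega>) mu L (real_of_rat q) (cm t)) \<longlonglongrightarrow> Lim mu (real_of_rat q) (cm t)"
      by (simp add: avg_def Lim_def)
  qed
qed

lemma AE_conv: "AE \<omega> in M. \<forall>t\<in>({..3::nat} \<times> UNIV). \<forall>R::nat.
    convergent (\<lambda>L. (\<Sum>k\<in>{1..L}. GR mu R t (X k \<omega>)) / real L)"
proof (rule AE_finite_allI)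
  show "finite ({..3::nat} \<times> (UNIV :: ('d \<times> 'd \<times> 'd) set))" by simp
  fix t :: "nat \<times> 'd \<times> 'd \<times> 'd"
  show "AE \<omega> in M. \<forall>R::nat. convergent (\<lambda>L. (\<Sum>k\<in>{1..L}. GR mu R t (X k \<omega>)) / real L)"
  proof (subst AE_all_countable, intro allI)
    fix R :: nat
    have "AE \<omega> in M. (\<lambda>L. (\<Sum>k\<in>{1..L}. GR mu R t (X k \<omega>)) / real L) \<longlonglongrightarrow> (\<integral>x. p x * GR mu R t x \<partial>lborel)"
      by (rule slln_pb[OF pbound_GR]) measurable
    then show "AE \<omega> in M. convergent (\<lambda>L. (\<Sum>k\<in>{1..L}. GR mu R t (X k \<omega>)) / real L)"
      by (auto intro: convergentI elim!: AE_mp)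
  qed
qed

end



definition Q1 :: "real \<Rightarrow> real \<Rightarrow> real \<Rightarrow> real \<Rightarrow> real" where
  "Q1 D Nu Pa N1u = N1u / D - (Pa / D^2) * Nu"
definition Q2 :: "real \<Rightarrow> real \<Rightarrow> real \<Rightarrow> real \<Rightarrow> real \<Rightarrow> real \<Rightarrow> real \<Rightarrow> real \<Rightarrow> real" where
  "Q2 D Nu Pg Ph Pgh N1hu N1gu N2u = N2u / D - (Pg / D^2) * N1hu - (Pgh / D^2) * Nu
     + (2 * Ph * Pg / D^3) * Nu - (Ph / D^2) * N1gu"

lemma Q1_hom: "L \<noteq> 0 \<Longrightarrow> Q1 (L * D) (L * Nu) (L * Pa) (L * N1u) = Q1 D Nu Pa N1u"
  unfolding Q1_def by (simp add: field_simps power2_eq_square)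

lemma Q2_hom: "L \<noteq> 0 \<Longrightarrow> Q2 (L * D) (L * Nu) (L * Pg) (L * Ph) (L * Pgh) (L * N1hu) (L * N1gu) (L * N2u)
   = Q2 D Nu Pg Ph Pgh N1hu N1gu N2u"
  unfolding Q2_def by (simp add: field_simps power2_eq_square power3_eq_cube)

lemma Q1_val: "M \<noteq> 0 \<Longrightarrow> Q1 M (M * Au) (M * Aw) (M * (Aw * Au + Cwu)) = Cwu"
  unfolding Q1_def by (simp add: field_simps power2_eq_square)

lemma Q2_val: "M \<noteq> 0 \<Longrightarrow>
  Q2 M (M * Au) (M * Ag) (M * Ah) (M * (Ag * Ah + Cgh) + M * Az) (M * (Ah * Au + Chu)) (M * (Ag * Au + Cgu))
     (M * (Ag * Ah * Au + Ag * Chu + Ah * Cgu + Au * Cgh) + M * (Az * Au + Czu)) = Czu"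
  unfolding Q2_def by (simp add: field_simps power2_eq_square power3_eq_cube)

lemma sum_inner_scaleR: "(\<Sum>k\<in>A. f k *\<^sub>R (x k :: real^'d)) \<bullet> u = (\<Sum>k\<in>A. f k * (x k \<bullet> u))"
  by (simp add: inner_sum_left)

context gauss
begin

lemma final_omega:
  fixes xs :: "nat \<Rightarrow> real^'d" and mu :: "real^'d" and lam :: real
  assumes H: "\<And>t c. t \<in> {..3::nat} \<times> UNIV \<Longrightarrow> (\<lambda>L. avg xs mu L c (cm t)) \<longlonglongrightarrow> Lim mu c (cm t)"
  shows "(\<lambda>L. T_L lam xs L mu) \<longlonglongrightarrow> T_inf lam S (xs 1) mu
         \<and> (\<forall>h. (\<lambda>L. D1 (T_L lam xs L) mu h) \<longlonglongrightarrow> D1 (T_inf lam S (xs 1)) mu h)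
         \<and> (\<forall>h k. (\<lambda>L. D2 (T_L lam xs L) mu h k) \<longlonglongrightarrow> D2 (T_inf lam S (xs 1)) mu h k)"
proof -
  define c where "c = lam * (xs 1 \<bullet> mu)"
  define v where "v = c *\<^sub>R mu"
  define m where "m = S *v v"
  define MM where "MM = Mg v"
  have MM0: "MM \<noteq> 0" unfolding MM_def Mg_def by simp
  have Ek: "Ek lam xs k mu = exp (c * (xs k \<bullet> mu))" for k unfolding Ek_def c_def by (simp add: mult.assoc)
  note g0 = good0[OF H, of c] and g1 = good1[OF H, of c] and g2 = good2[OF H, of c] and g3 = good3[OF H, of c]
  have l0: "Lim mu c (\<lambda>y. 1) = MM" unfolding MM_def v_def by (rule Lim0)
  have l1: "Lim mu c (\<lambda>y. y \<bullet> a) = MM * (m \<bullet> a)" for a unfolding MM_def m_def v_def by (rule Lim1)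
  have l2: "Lim mu c (\<lambda>y. (y \<bullet> a) * (y \<bullet> b)) = MM * ((m \<bullet> a) * (m \<bullet> b) + a \<bullet> (S *v b))" for a b
    unfolding MM_def m_def v_def by (rule Lim2)
  have l3: "Lim mu c (\<lambda>y. (y \<bullet> a) * (y \<bullet> b) * (y \<bullet> d)) = MM * ((m \<bullet> a) * (m \<bullet> b) * (m \<bullet> d)
     + (m \<bullet> a) * (b \<bullet> (S *v d)) + (m \<bullet> b) * (a \<bullet> (S *v d)) + (m \<bullet> d) * (a \<bullet> (S *v b)))" for a b d
    unfolding MM_def m_def v_def by (rule Lim3)
  have mu_eq: "m \<bullet> a = c * ((S *v mu) \<bullet> a)" for a unfolding m_def v_def by (rule mS_scale)
  have DD_a: "DD lam xs L mu = real L * avg xs mu L c (\<lambda>y. 1)" if "L \<ge> 1" for L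
    unfolding DD_def Ek using sum_avg[OF that, of c xs mu "\<lambda>y. 1"] by simp
  have NN_a: "NN lam xs L mu \<bullet> u = real L * avg xs mu L c (\<lambda>y. y \<bullet> u)" if "L \<ge> 1" for L u
    unfolding NN_def Ek sum_inner_scaleR using sum_avg[OF that, of c xs mu "\<lambda>y. y \<bullet> u"] by simp
  have DD1_a: "DD1 lam xs L mu h = real L * avg xs mu L c (\<lambda>y. y \<bullet> wv lam xs mu h)" if "L \<ge> 1" for L h
    unfolding DD1_def Ek using sum_avg[OF that, of c xs mu "\<lambda>y. y \<bullet> wv lam xs mu h"] by simp
  have NN1_a: "NN1 lam xs L mu h \<bullet> u = real L * avg xs mu L c (\<lambda>y. (y \<bullet> wv lam xs mu h) * (y \<bullet> u))" if "L \<ge> 1" for L h u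
    unfolding NN1_def Ek sum_inner_scaleR using sum_avg[OF that, of c xs mu "\<lambda>y. (y \<bullet> wv lam xs mu h) * (y \<bullet> u)"]
    by (simp add: mult.assoc)
  have DD2_a: "DD2 lam xs L mu h g = real L * avg xs mu L c (\<lambda>y. (y \<bullet> wv lam xs mu g) * (y \<bullet> wv lam xs mu h))
      + real L * avg xs mu L c (\<lambda>y. y \<bullet> zv lam xs h g)" if "L \<ge> 1" for L h g
    unfolding DD2_def Ek distrib_left[symmetric] avg_add[symmetric]
    using sum_avg[OF that, of c xs mu "\<lambda>y. (y \<bullet> wv lam xs mu g) * (y \<bullet> wv lam xs mu h) + y \<bullet> zv lam xs h g"] by simp
  have NN2_a: "NN2 lam xs L mu h g \<bullet> u = real L * avg xs mu L c (\<lambda>y. (y \<bullet> wv lam xs mu g) * (y \<bullet> wv lam xs mu h) * (y \<bullet> u))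
      + real L * avg xs mu L c (\<lambda>y. (y \<bullet> zv lam xs h g) * (y \<bullet> u))" if "L \<ge> 1" for L h g u
  proof -
    have "NN2 lam xs L mu h g \<bullet> u = (\<Sum>k\<in>{1..L}. exp (c * (xs k \<bullet> mu)) *
       ((\<lambda>y. (y \<bullet> wv lam xs mu g) * (y \<bullet> wv lam xs mu h) * (y \<bullet> u) + (y \<bullet> zv lam xs h g) * (y \<bullet> u)) (xs k)))"
      unfolding NN2_def Ek sum_inner_scaleR by (intro sum.cong refl) (simp add: algebra_simps)
    also have "\<dots> = real L * avg xs mu L c (\<lambda>y. (y \<bullet> wv lam xs mu g) * (y \<bullet> wv lam xs mu h) * (y \<bullet> u) + (y \<bullet> zv lam xs h g) * (y \<bullet> u))"
      by (rule sum_avg[OF that])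
    finally show ?thesis by (simp add: avg_add distrib_left)
  qed
  have evL: "\<forall>\<^sub>F L in sequentially. L \<ge> (1::nat)" by (rule eventually_ge_at_top)
  have T0: "(\<lambda>L. T_L lam xs L mu) \<longlonglongrightarrow> T_inf lam S (xs 1) mu"
  proof (rule vec_tendstoI)
    fix i
    let ?u = "axis i 1 :: real^'d"
    have ev: "\<forall>\<^sub>F L in sequentially. T_L lam xs L mu $ i = avg xs mu L c (\<lambda>y. y \<bullet> ?u) / avg xs mu L c (\<lambda>y. 1)"
      using evL
    proof (rule eventually_mono)
      fix L :: nat assume L: "L \<ge> 1"
      have "T_L lam xs L mu $ i = (NN lam xs L mu \<bullet> ?u) / DD lam xs L mu"
        unfolding T_L_eq cart_eq_inner_axis by (simp add: divide_inverse_commute)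
      also have "\<dots> = avg xs mu L c (\<lambda>y. y \<bullet> ?u) / avg xs mu L c (\<lambda>y. 1)"
        using L by (simp add: NN_a DD_a)
      finally show "T_L lam xs L mu $ i = avg xs mu L c (\<lambda>y. y \<bullet> ?u) / avg xs mu L c (\<lambda>y. 1)" .
    qed
    have "(\<lambda>L. avg xs mu L c (\<lambda>y. y \<bullet> ?u) / avg xs mu L c (\<lambda>y. 1)) \<longlonglongrightarrow> (MM * (m \<bullet> ?u)) / MM"
      using g1[of ?u] g0 MM0 unfolding l0 l1 by (intro tendsto_intros) auto
    moreover have "(MM * (m \<bullet> ?u)) / MM = T_inf lam S (xs 1) mu $ i"
      using MM0 unfolding T_inf_eq cart_eq_inner_axis mu_eq c_def by (simp add: inner_commute)
    ultimately show "(\<lambda>L. T_L lam xs L mu $ i) \<longlonglongrightarrow> T_inf lam S (xs 1) mu $ i"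
      using tendsto_cong[OF ev] by simp
  qed
  have T1: "(\<lambda>L. D1 (T_L lam xs L) mu h) \<longlonglongrightarrow> D1 (T_inf lam S (xs 1)) mu h" for h
  proof (rule vec_tendstoI)
    fix i
    let ?u = "axis i 1 :: real^'d"
    let ?w = "wv lam xs mu h"
    let ?f = "\<lambda>L. Q1 (avg xs mu L c (\<lambda>y. 1)) (avg xs mu L c (\<lambda>y. y \<bullet> ?u)) (avg xs mu L c (\<lambda>y. y \<bullet> ?w))
                  (avg xs mu L c (\<lambda>y. (y \<bullet> ?w) * (y \<bullet> ?u)))"
    have ev: "\<forall>\<^sub>F L in sequentially. D1 (T_L lam xs L) mu h $ i = ?f L"
      using evL
    proof (rule eventually_mono)
      fix L :: nat assume L: "L \<ge> 1"
      have "D1 (T_L lam xs L) mu h $ i = Q1 (DD lam xs L mu) (NN lam xs L mu \<bullet> ?u) (DD1 lam xs L mu h) (NN1 lam xs L mu h \<bullet> ?u)"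
        unfolding D1_T_L[OF L] dT_def Q1_def cart_eq_inner_axis by (simp add: inner_diff_left)
      also have "\<dots> = ?f L" using L by (simp add: DD_a NN_a DD1_a NN1_a Q1_hom)
      finally show "D1 (T_L lam xs L) mu h $ i = ?f L" .
    qed
    have "?f \<longlonglongrightarrow> Q1 MM (MM * (m \<bullet> ?u)) (MM * (m \<bullet> ?w)) (MM * ((m \<bullet> ?w) * (m \<bullet> ?u) + ?w \<bullet> (S *v ?u)))"
      unfolding Q1_def using g0 g1[of ?u] g1[of ?w] g2[of ?w ?u] MM0 unfolding l0 l1 l2
      by (intro tendsto_intros) auto
    moreover have "Q1 MM (MM * (m \<bullet> ?u)) (MM * (m \<bullet> ?w)) (MM * ((m \<bullet> ?w) * (m \<bullet> ?u) + ?w \<bullet> (S *v ?u))) = D1 (T_inf lam S (xs 1)) mu h $ i"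
      unfolding Q1_val[OF MM0] D1_T_inf cart_eq_inner_axis wv_def
      by (simp add: inner_add_left inner_add_right inner_S[of _ ?u] inner_commute algebra_simps)
    ultimately show "(\<lambda>L. D1 (T_L lam xs L) mu h $ i) \<longlonglongrightarrow> D1 (T_inf lam S (xs 1)) mu h $ i"
      using tendsto_cong[OF ev] by simp
  qed
  have T2: "(\<lambda>L. D2 (T_L lam xs L) mu h g) \<longlonglongrightarrow> D2 (T_inf lam S (xs 1)) mu h g" for h g
  proof (rule vec_tendstoI)
    fix i
    let ?u = "axis i 1 :: real^'d"
    let ?wh = "wv lam xs mu h" and ?wg = "wv lam xs mu g" and ?z = "zv lam xs h g"
    let ?f = "\<lambda>L. Q2 (avg xs mu L c (\<lambda>y. 1)) (avg xs mu L c (\<lambda>y. y \<bullet> ?u))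
        (avg xs mu L c (\<lambda>y. y \<bullet> ?wg)) (avg xs mu L c (\<lambda>y. y \<bullet> ?wh))
        (avg xs mu L c (\<lambda>y. (y \<bullet> ?wg) * (y \<bullet> ?wh)) + avg xs mu L c (\<lambda>y. y \<bullet> ?z))
        (avg xs mu L c (\<lambda>y. (y \<bullet> ?wh) * (y \<bullet> ?u))) (avg xs mu L c (\<lambda>y. (y \<bullet> ?wg) * (y \<bullet> ?u)))
        (avg xs mu L c (\<lambda>y. (y \<bullet> ?wg) * (y \<bullet> ?wh) * (y \<bullet> ?u)) + avg xs mu L c (\<lambda>y. (y \<bullet> ?z) * (y \<bullet> ?u)))"
    have ev: "\<forall>\<^sub>F L in sequentially. D2 (T_L lam xs L) mu h g $ i = ?f L"
      using evL
    proof (rule eventually_mono)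
      fix L :: nat assume L: "L \<ge> 1"
      have "D2 (T_L lam xs L) mu h g $ i = Q2 (DD lam xs L mu) (NN lam xs L mu \<bullet> ?u) (DD1 lam xs L mu g) (DD1 lam xs L mu h)
          (DD2 lam xs L mu h g) (NN1 lam xs L mu h \<bullet> ?u) (NN1 lam xs L mu g \<bullet> ?u) (NN2 lam xs L mu h g \<bullet> ?u)"
        unfolding D2_T_L[OF L] d2T_def Q2_def cart_eq_inner_axis by (simp add: inner_diff_left inner_add_left)
      also have "\<dots> = ?f L"
        using L by (simp add: DD_a NN_a DD1_a NN1_a DD2_a NN2_a distrib_left[symmetric] Q2_hom)
      finally show "D2 (T_L lam xs L) mu h g $ i = ?f L" .
    qed
    have "?f \<longlonglongrightarrow> Q2 MM (MM * (m \<bullet> ?u)) (MM * (m \<bullet> ?wg)) (MM * (m \<bullet> ?wh))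
        (MM * ((m \<bullet> ?wg) * (m \<bullet> ?wh) + ?wg \<bullet> (S *v ?wh)) + MM * (m \<bullet> ?z))
        (MM * ((m \<bullet> ?wh) * (m \<bullet> ?u) + ?wh \<bullet> (S *v ?u))) (MM * ((m \<bullet> ?wg) * (m \<bullet> ?u) + ?wg \<bullet> (S *v ?u)))
        (MM * ((m \<bullet> ?wg) * (m \<bullet> ?wh) * (m \<bullet> ?u) + (m \<bullet> ?wg) * (?wh \<bullet> (S *v ?u)) + (m \<bullet> ?wh) * (?wg \<bullet> (S *v ?u))
           + (m \<bullet> ?u) * (?wg \<bullet> (S *v ?wh))) + MM * ((m \<bullet> ?z) * (m \<bullet> ?u) + ?z \<bullet> (S *v ?u)))"
      unfolding Q2_def using g0 g1[of ?u] g1[of ?wg] g1[of ?wh] g1[of ?z] g2[of ?wg ?wh] g2[of ?wh ?u] g2[of ?wg ?u]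
        g2[of ?z ?u] g3[of ?wg ?wh ?u] MM0 unfolding l0 l1 l2 l3
      by (intro tendsto_intros) auto
    moreover have "Q2 MM (MM * (m \<bullet> ?u)) (MM * (m \<bullet> ?wg)) (MM * (m \<bullet> ?wh))
        (MM * ((m \<bullet> ?wg) * (m \<bullet> ?wh) + ?wg \<bullet> (S *v ?wh)) + MM * (m \<bullet> ?z))
        (MM * ((m \<bullet> ?wh) * (m \<bullet> ?u) + ?wh \<bullet> (S *v ?u))) (MM * ((m \<bullet> ?wg) * (m \<bullet> ?u) + ?wg \<bullet> (S *v ?u)))
        (MM * ((m \<bullet> ?wg) * (m \<bullet> ?wh) * (m \<bullet> ?u) + (m \<bullet> ?wg) * (?wh \<bullet> (S *v ?u)) + (m \<bullet> ?wh) * (?wg \<bullet> (S *v ?u))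
           + (m \<bullet> ?u) * (?wg \<bullet> (S *v ?wh))) + MM * ((m \<bullet> ?z) * (m \<bullet> ?u) + ?z \<bullet> (S *v ?u)))
       = ?z \<bullet> (S *v ?u)"
      by (rule Q2_val[OF MM0])
    moreover have "?z \<bullet> (S *v ?u) = D2 (T_inf lam S (xs 1)) mu h g $ i"
      unfolding D2_T_inf cart_eq_inner_axis zv_def
      by (simp add: inner_add_left inner_add_right inner_S[of _ ?u] inner_commute algebra_simps)
    ultimately show "(\<lambda>L. D2 (T_L lam xs L) mu h g $ i) \<longlonglongrightarrow> D2 (T_inf lam S (xs 1)) mu h g $ i"
      using tendsto_cong[OF ev] by simp
  qed
  show ?thesis using T0 T1 T2 by blast
qed

end



theorem lemma6:
  fixes M :: "'w measure" and X :: "nat \<Rightarrow> 'w \<Rightarrow> real^'d"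
    and Sigma :: "real^'d^'d" and mu :: "real^'d" and lam :: real
  assumes "prob_space M"
    and "lam > 0"
    and "sym_pos_def Sigma"
    and "prob_space.indep_vars M (\<lambda>_. borel) X {1..}"
    and "\<And>k. k \<ge> 1 \<Longrightarrow> distributed M lborel (X k) (\<lambda>x. ennreal (mvn_density Sigma x))"
  shows "AE \<omega> in M.
           (\<lambda>L. T_L lam (\<lambda>k. X k \<omega>) L mu) \<longlonglongrightarrow> T_inf lam Sigma (X 1 \<omega>) mu
         \<and> (\<forall>h. (\<lambda>L. D1 (T_L lam (\<lambda>k. X k \<omega>) L) mu h)
                 \<longlonglongrightarrow> D1 (T_inf lam Sigma (X 1 \<omega>)) mu h)
         \<and> (\<forall>h k. (\<lambda>L. D2 (T_L lam (\<lambda>k. X k \<omega>) L) mu h k)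
                 \<longlonglongrightarrow> D2 (T_inf lam Sigma (X 1 \<omega>)) mu h k)"
proof -
  interpret P: prob_space M by (rule assms(1))
  have sym: "transpose Sigma = Sigma" and pos: "\<And>x. x \<noteq> 0 \<Longrightarrow> x \<bullet> (Sigma *v x) > 0"
    using assms(3) unfolding sym_pos_def_def by auto
  have dis1: "distributed M lborel (X 1) (\<lambda>x. ennreal (mvn_density Sigma x))" using assms(5) by simp
  have norm: "(\<integral>\<^sup>+x. ennreal (mvn_density Sigma x) \<partial>lborel) = 1"
  proof -
    have "(\<integral>\<^sup>+x. ennreal (mvn_density Sigma x) * 1 \<partial>lborel) = (\<integral>\<^sup>+\<omega>. 1 \<partial>M)"
      by (rule distributed_nn_integral[OF dis1]) simp
    then show ?thesis using P.emeasure_space_1 by simp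
  qed
  have "iid Sigma M X"
    using sym pos norm assms(1,4,5) by (auto simp: iid_def iid_axioms_def gauss_def)
  then interpret I: iid Sigma M X .
  have AE: "AE \<omega> in M. (\<forall>t\<in>({..3::nat} \<times> UNIV). \<forall>q::rat.
      (\<lambda>L. avg (\<lambda>k. X k \<omega>) mu L (real_of_rat q) (cm t)) \<longlonglongrightarrow> I.Lim mu (real_of_rat q) (cm t))
    \<and> (\<forall>t\<in>({..3::nat} \<times> UNIV). \<forall>R::nat. convergent (\<lambda>L. (\<Sum>k\<in>{1..L}. GR mu R t (X k \<omega>)) / real L))"
    using I.AE_rat[of mu] I.AE_conv[of mu] by (simp add: AE_conj_iff)
  then show ?thesis
  proof (rule AE_mp, intro AE_I2 impI)
    fix \<omega>
    assume A: "(\<forall>t\<in>({..3::nat} \<times> UNIV). \<forall>q::rat.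
      (\<lambda>L. avg (\<lambda>k. X k \<omega>) mu L (real_of_rat q) (cm t)) \<longlonglongrightarrow> I.Lim mu (real_of_rat q) (cm t))
    \<and> (\<forall>t\<in>({..3::nat} \<times> UNIV). \<forall>R::nat. convergent (\<lambda>L. (\<Sum>k\<in>{1..L}. GR mu R t (X k \<omega>)) / real L))"
    have H: "(\<lambda>L. avg (\<lambda>k. X k \<omega>) mu L c (cm t)) \<longlonglongrightarrow> I.Lim mu c (cm t)" if "t \<in> {..3::nat} \<times> UNIV" for t c
      using A that by (intro I.good_ext) auto
    show "(\<lambda>L. T_L lam (\<lambda>k. X k \<omega>) L mu) \<longlonglongrightarrow> T_inf lam Sigma (X 1 \<omega>) mu
         \<and> (\<forall>h. (\<lambda>L. D1 (T_L lam (\<lambda>k. X k \<omega>) L) mu h) \<longlonglongrightarrow> D1 (T_inf lam Sigma (X 1 \<omega>)) mu h)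
         \<and> (\<forall>h k. (\<lambda>L. D2 (T_L lam (\<lambda>k. X k \<omega>) L) mu h k) \<longlonglongrightarrow> D2 (T_inf lam Sigma (X 1 \<omega>)) mu h k)"
      using I.final_omega[of "\<lambda>k. X k \<omega>" mu lam] H by simp
  qed
qed


end
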